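(* Let $\mu^s$ be a positive sampling policy and let $(\mu^t)_{t\in[T]}$ be any sequence of min-player policies with $\mu^t$ $\mathcal F^{t-1}$-measurable. Then for every $\delta\in(0,1)$, with probability at least $1-\delta$, \[\mathcal R^T_{\min}\le\max\{\hat{\mathcal R}^T_{\min},0\}+4\sqrt{\iota H\kappa(\mu^s)T},\qquad \iota=\log\big((A_{\mathcal X}+1)/\delta\big).\]
   Context: Game structure. Fix an integer $H\ge1$. The min-player's information sets form a finite set $\mathcal X$; each $x\in\mathcal X$ has a depth $h(x)\in\{1,\dots,H\}$ and a finite nonempty action set $\mathcal A(x)$. Perfect recall: every $x$ of depth $h$ has a unique history $(x_1,a_1,\dots,x_{h-1},a_{h-1},x_h=x)$ with $x_i$ of depth $i$ and $a_i\in\mathcal A(x_i)$. $A_{\mathcal X}=\sum_{x}|\mathcal A(x)|$. A policy is $\mu=(\mu(\cdot|x))_{x\in\mathcal X}$ with $\mu(\cdot|x)\in\Delta_{\mathcal A(x)}$; $\Pi_{\min}$ is the set of policies; $\mu$ is positive if $\mu(a|x)>0$ for all $x,a$. For $x$ of depth $h$ with history $(x_1,a_1,\dots,x_h=x)$ and $a\in\mathcal A(x)$, putting $a_h=a$, the realization plan is $\mu_{1:}(x,a)=\prod_{i=1}^h\mu(a_i|x_i)$. $\langle\cdot,\cdot\rangle$ is the standard inner product on $\mathbb R^{A_{\mathcal X}}$ indexed by pairs $(x,a)$. For positive $\mu^s$, $\kappa(\mu^s)=\max_{\mu\in\Pi_{\min}}\sum_{x\in\mathcal X}\sum_{a\in\mathcal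 A(x)}\mu_{1:}(x,a)/\mu^s_{1:}(x,a)$. Episodes and protocol. For each max-player policy $\nu$ there are numbers $p^\nu_{1:}(x)\in[0,1]$ and $\ell^\nu_h(x,a)\in[0,1]$ ($x$ of depth $h$) such that an episode played with min-player policy $\mu$ against $\nu$ produces a random trajectory $(x_1,a_1,\ell_1,\dots,x_H,a_H,\ell_H)$ with $x_h$ of depth $h$, $a_h\in\mathcal A(x_h)$, $\ell_h\in[0,1]$, and for every $x$ of depth $h$ and $a\in\mathcal A(x)$: $\mathbb P(x_h=x,a_h=a)=p^\nu_{1:}(x)\mu_{1:}(x,a)$ and $\mathbb E[\ell_h\mathbf 1\{x_h=x,a_h=a\}]=p^\nu_{1:}(x)\mu_{1:}(x,a)\ell^\nu_h(x,a)$. Set $\ell^\nu(x,a)=p^\nu_{1:}(x)\ell^\nu_h(x,a)$. Fix a filtration $(\mathcal F^t)_{t=0}^T$. At each round $t=1,\dots,T$, a max-player policy $\nu^t$ is $\mathcal F^{t-1}$-measurable; conditionally on $\mathcal F^{t-1}$ the min-player observes a trajectory $(x^t_h,a^t_h,\ell^t_h)_{h\le H}$ distributed as an episode played with $(\mu^s,\nu^t)$, and it is $\mathcal F^t$-measurable. Set $\ell^t=\ell^{\nu^t}$ and $\mathcal R^T_{\min}=\max_{\mu^\dagger\in\Pi_{\min}}\sum_{t=1}^T\langle\ell^t,\mu^t_{1:}-\mu^\dagger_{1:}\rangle$. The estimated loss is $\hat\ell^t(x,a)=\mathbf 1\{x=x^t_h,a=a^t_h\}\ell^t_h/\mu^s_{1:}(x,a)$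 for $x$ of depth $h$, and the estimated regret is $\hat{\mathcal R}^T_{\min}=\max_{\mu^\dagger\in\Pi_{\min}}\sum_{t=1}^T\langle\hat\ell^t,\mu^t_{1:}-\mu^\dagger_{1:}\rangle$. *)

theory Defs
  imports "HOL-Probability.Probability"
begin

text \<open>X: information sets; Act x: action set of x; dep x: depth of x; H: horizon;
  hist x: the unique history [(x_1,a_1),...,(x_{h-1},a_{h-1})] of x (perfect recall).\<close>

definition game_struct ::
  "'x set \<Rightarrow> ('x \<Rightarrow> 'a set) \<Rightarrow> ('x \<Rightarrow> nat) \<Rightarrow> nat \<Rightarrow> ('x \<Rightarrow> ('x \<times> 'a) list) \<Rightarrow> bool" where
  "game_struct X Act dep H hist \<longleftrightarrow>
     H \<ge> 1 \<and> finite X \<and>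
     (\<forall>x\<in>X. finite (Act x) \<and> Act x \<noteq> {} \<and> 1 \<le> dep x \<and> dep x \<le> H) \<and>
     (\<forall>x\<in>X. length (hist x) = dep x - 1 \<and>
        (\<forall>i < length (hist x).
            fst (hist x ! i) \<in> X \<and> dep (fst (hist x ! i)) = i + 1 \<and>
            snd (hist x ! i) \<in> Act (fst (hist x ! i)) \<and>
            hist (fst (hist x ! i)) = take i (hist x)))"

definition policies :: "'x set \<Rightarrow> ('x \<Rightarrow> 'a set) \<Rightarrow> ('x \<Rightarrow> 'a \<Rightarrow> real) set" where
  "policies X Act = {mu. \<forall>x\<in>X. (\<forall>a\<in>Act x. mu x a \<ge> 0) \<and> (\<Sum>a\<in>Act x. mu x a) = 1}"

definition positive_policy :: "'x set \<Rightarrow> ('x \<Rightarrow> 'a set) \<Rightarrow> ('x \<Rightarrow> 'a \<Rightarrow> real) \<Rightarrow> bool" where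
  "positive_policy X Act mu \<longleftrightarrow> mu \<in> policies X Act \<and> (\<forall>x\<in>X. \<forall>a\<in>Act x. mu x a > 0)"

definition real_plan :: "('x \<Rightarrow> ('x \<times> 'a) list) \<Rightarrow> ('x \<Rightarrow> 'a \<Rightarrow> real) \<Rightarrow> 'x \<Rightarrow> 'a \<Rightarrow> real" where
  "real_plan hist mu x a = prod_list (map (\<lambda>(y, b). mu y b) (hist x)) * mu x a"

definition ip :: "'x set \<Rightarrow> ('x \<Rightarrow> 'a set) \<Rightarrow> ('x \<Rightarrow> 'a \<Rightarrow> real) \<Rightarrow> ('x \<Rightarrow> 'a \<Rightarrow> real) \<Rightarrow> real" where
  "ip X Act f g = (\<Sum>x\<in>X. \<Sum>a\<in>Act x. f x a * g x a)"

definition num_actions :: "'x set \<Rightarrow> ('x \<Rightarrow> 'a set) \<Rightarrow> nat" where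
  "num_actions X Act = (\<Sum>x\<in>X. card (Act x))"

definition kappa ::
  "'x set \<Rightarrow> ('x \<Rightarrow> 'a set) \<Rightarrow> ('x \<Rightarrow> ('x \<times> 'a) list) \<Rightarrow> ('x \<Rightarrow> 'a \<Rightarrow> real) \<Rightarrow> real" where
  "kappa X Act hist mus =
     (SUP mu \<in> policies X Act. \<Sum>x\<in>X. \<Sum>a\<in>Act x. real_plan hist mu x a / real_plan hist mus x a)"

definition regret ::
  "'x set \<Rightarrow> ('x \<Rightarrow> 'a set) \<Rightarrow> ('x \<Rightarrow> ('x \<times> 'a) list) \<Rightarrow> nat \<Rightarrow>
   (nat \<Rightarrow> 'x \<Rightarrow> 'a \<Rightarrow> real) \<Rightarrow> (nat \<Rightarrow> 'x \<Rightarrow> 'a \<Rightarrow> real) \<Rightarrow> real" where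
  "regret X Act hist T loss mu =
     (SUP mu' \<in> policies X Act. \<Sum>t\<in>{1..T}.
        ip X Act (loss t) (\<lambda>x a. real_plan hist (mu t) x a - real_plan hist mu' x a))"

end

theory Submission
  imports Defs
begin


lemma exp_neg_le_quad:
  fixes y :: real assumes "0 \<le> y"
  shows "exp (-y) \<le> 1 - y + y\<^sup>2 / 2"
proof -
  let ?g = "\<lambda>y::real. 1 - y + y\<^sup>2 / 2 - exp (-y)"
  have "?g 0 \<le> ?g y"
  proof (rule DERIV_nonneg_imp_increasing_open[OF assms])
    fix x :: real assume "0 < x" "x < y"
    have "DERIV ?g x :> (- 1 + x + exp (-x))"
      by (auto intro!: derivative_eq_intros simp: power2_eq_square algebra_simps)
    moreover have "0 \<le> - 1 + x + exp (-x)" using exp_ge_add_one_self[of "-x"] by simp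
    ultimately show "\<exists>d. DERIV ?g x :> d \<and> 0 \<le> d" by blast
  next
    show "continuous_on {0..y} ?g" by (intro continuous_intros) auto
  qed
  then show ?thesis by simp
qed

lemma subalg_mono:
  assumes "subalgebra M A" "subalgebra M B" "sets A \<subseteq> sets B"
  shows "subalgebra B A"
  using assms unfolding subalgebra_def by auto

lemma exp_supermart:
  fixes M :: "'w measure" and F :: "nat \<Rightarrow> 'w measure" and Z :: "nat \<Rightarrow> 'w \<Rightarrow> real"
  assumes prob: "prob_space M"
    and sub: "\<And>t. t \<le> T \<Longrightarrow> subalgebra M (F t)"
    and mono: "\<And>s t. s \<le> t \<Longrightarrow> t \<le> T \<Longrightarrow> sets (F s) \<subseteq> sets (F t)"
    and meas: "\<And>t. t \<in> {1..T} \<Longrightarrow> Z t \<in> borel_measurable (F t)"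
    and bnd: "\<And>t \<omega>. t \<in> {1..T} \<Longrightarrow> \<omega> \<in> space M \<Longrightarrow> Z t \<omega> \<le> C"
    and ce: "\<And>t. t \<in> {1..T} \<Longrightarrow> AE \<omega> in M. real_cond_exp M (F (t-1)) (\<lambda>\<omega>. exp (Z t \<omega>)) \<omega> \<le> 1"
  shows "measure M {\<omega> \<in> space M. \<iota> \<le> (\<Sum>t\<in>{1..T}. Z t \<omega>)} \<le> exp (- \<iota>)"
proof -
  interpret prob_space M by (rule prob)
  have key: "n \<le> T \<Longrightarrow> (\<lambda>\<omega>. exp (\<Sum>t\<in>{1..n}. Z t \<omega>)) \<in> borel_measurable (F n) \<and>
      integrable M (\<lambda>\<omega>. exp (\<Sum>t\<in>{1..n}. Z t \<omega>)) \<and> (\<integral>\<omega>. exp (\<Sum>t\<in>{1..n}. Z t \<omega>) \<partial>M) \<le> 1" for n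
  proof (induction n)
    case 0
    then show ?case by (simp add: prob_space)
  next
    case (Suc n)
    have subn: "subalgebra M (F n)" using Suc by (intro sub) auto
    have subS: "subalgebra M (F (Suc n))" using Suc by (intro sub) auto
    have sfs: "sigma_finite_subalgebra M (F n)"
      by (rule finite_measure_subalgebra_is_sigma_finite)
        (simp add: finite_measure_subalgebra_def finite_measure_subalgebra_axioms_def subn finite_measure_axioms)
    define g where "g = (\<lambda>\<omega>. exp (\<Sum>t\<in>{1..n}. Z t \<omega>))"
    define e where "e = (\<lambda>\<omega>. exp (Z (Suc n) \<omega>))"
    from Suc have IH: "g \<in> borel_measurable (F n)" "integrable M g" "integral\<^sup>L M g \<le> 1"
      unfolding g_def by auto
    have gM: "g \<in> borel_measurable M" using measurable_from_subalg[OF subn IH(1)] .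
    have eS: "e \<in> borel_measurable (F (Suc n))" unfolding e_def using meas[of "Suc n"] Suc.prems by auto
    have eM: "e \<in> borel_measurable M" using measurable_from_subalg[OF subS eS] .
    have sum_eq: "\<And>\<omega>. (\<Sum>t\<in>{1..Suc n}. Z t \<omega>) = (\<Sum>t\<in>{1..n}. Z t \<omega>) + Z (Suc n) \<omega>"
      by simp
    have prodeq: "\<And>\<omega>. exp (\<Sum>t\<in>{1..Suc n}. Z t \<omega>) = g \<omega> * e \<omega>"
      unfolding g_def e_def sum_eq by (simp add: exp_add)
    have subnS: "subalgebra (F (Suc n)) (F n)"
      by (rule subalg_mono[OF subn subS]) (use Suc.prems in \<open>intro mono; auto\<close>)
    have gS: "g \<in> borel_measurable (F (Suc n))" by (rule measurable_from_subalg[OF subnS IH(1)])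
    have m1: "(\<lambda>\<omega>. exp (\<Sum>t\<in>{1..Suc n}. Z t \<omega>)) \<in> borel_measurable (F (Suc n))"
      unfolding prodeq using gS eS by measurable
    have bound: "\<And>\<omega>. \<omega> \<in> space M \<Longrightarrow> (\<Sum>t\<in>{1..Suc n}. Z t \<omega>) \<le> real (Suc n) * C"
    proof -
      fix \<omega> assume "\<omega> \<in> space M"
      have "(\<Sum>t\<in>{1..Suc n}. Z t \<omega>) \<le> (\<Sum>t\<in>{1..Suc n}. C)"
        by (intro sum_mono bnd) (use Suc.prems \<open>\<omega> \<in> space M\<close> in auto)
      then show "(\<Sum>t\<in>{1..Suc n}. Z t \<omega>) \<le> real (Suc n) * C" by simp
    qed
    have int1: "integrable M (\<lambda>\<omega>. g \<omega> * e \<omega>)"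
    proof (rule integrable_const_bound[where B="exp (real (Suc n) * C)"])
      show "AE \<omega> in M. norm (g \<omega> * e \<omega>) \<le> exp (real (Suc n) * C)"
      proof (intro AE_I2)
        fix \<omega> assume w: "\<omega> \<in> space M"
        have "norm (g \<omega> * e \<omega>) = exp (\<Sum>t\<in>{1..Suc n}. Z t \<omega>)" unfolding prodeq g_def e_def by simp
        also have "\<dots> \<le> exp (real (Suc n) * C)" using bound[OF w] by simp
        finally show "norm (g \<omega> * e \<omega>) \<le> exp (real (Suc n) * C)" .
      qed
      show "(\<lambda>\<omega>. g \<omega> * e \<omega>) \<in> borel_measurable M" using gM eM by measurable
    qed
    have ce1: "AE \<omega> in M. real_cond_exp M (F n) e \<omega> \<le> 1"
      using ce[of "Suc n"] Suc.prems unfolding e_def by auto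
    have int2: "integrable M (\<lambda>\<omega>. g \<omega> * real_cond_exp M (F n) e \<omega>)"
      by (rule sigma_finite_subalgebra.real_cond_exp_intg(1)[OF sfs int1 IH(1) eM])
    have "(\<integral>\<omega>. g \<omega> * e \<omega> \<partial>M) = (\<integral>\<omega>. g \<omega> * real_cond_exp M (F n) e \<omega> \<partial>M)"
      by (rule sigma_finite_subalgebra.real_cond_exp_intg(2)[OF sfs int1 IH(1) eM, symmetric])
    also have "\<dots> \<le> (\<integral>\<omega>. g \<omega> \<partial>M)"
    proof (rule integral_mono_AE[OF int2 IH(2)])
      show "AE \<omega> in M. g \<omega> * real_cond_exp M (F n) e \<omega> \<le> g \<omega>"
        using ce1 by eventually_elim (simp add: g_def mult_left_le)
    qed
    also have "\<dots> \<le> 1" by (rule IH(3))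
    finally have calc: "(\<integral>\<omega>. g \<omega> * e \<omega> \<partial>M) \<le> 1" .
    have fe: "(\<lambda>\<omega>. exp (\<Sum>t\<in>{1..Suc n}. Z t \<omega>)) = (\<lambda>\<omega>. g \<omega> * e \<omega>)"
      by (rule ext) (rule prodeq)
    show ?case unfolding fe using m1[unfolded fe] int1 calc by auto
  qed
  from key[of T] have kT: "integrable M (\<lambda>\<omega>. exp (\<Sum>t\<in>{1..T}. Z t \<omega>))"
    "(\<integral>\<omega>. exp (\<Sum>t\<in>{1..T}. Z t \<omega>) \<partial>M) \<le> 1" by auto
  have "{\<omega> \<in> space M. \<iota> \<le> (\<Sum>t\<in>{1..T}. Z t \<omega>)} = {\<omega> \<in> space M. exp \<iota> \<le> exp (\<Sum>t\<in>{1..T}. Z t \<omega>)}"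
    by auto
  also have "measure M \<dots> \<le> (\<integral>\<omega>. exp (\<Sum>t\<in>{1..T}. Z t \<omega>) \<partial>M) / exp \<iota>"
    by (rule integral_Markov_inequality_measure[OF kT(1)]) auto
  also have "\<dots> \<le> 1 / exp \<iota>" using kT(2) by (simp add: divide_right_mono)
  also have "\<dots> = exp (- \<iota>)" by (simp add: exp_minus field_simps)
  finally show ?thesis .
qed



lemma sfs_of:
  assumes "prob_space M" "subalgebra M G"
  shows "sigma_finite_subalgebra M G"
proof -
  interpret prob_space M by fact
  show ?thesis
    by (rule finite_measure_subalgebra_is_sigma_finite)
      (simp add: finite_measure_subalgebra_def finite_measure_subalgebra_axioms_def assms(2) finite_measure_axioms)
qed

lemma integrable_bdd:
  assumes "prob_space M" "f \<in> borel_measurable M" "\<And>\<omega>. \<omega> \<in> space M \<Longrightarrow> \<bar>f \<omega>\<bar> \<le> (B::real)"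
  shows "integrable M f"
proof -
  interpret prob_space M by fact
  show ?thesis by (rule integrable_const_bound[where B=B]) (use assms in auto)
qed

lemma integrable_bdd':
  assumes "prob_space M" "f \<in> borel_measurable M" "\<exists>B. \<forall>\<omega>\<in>space M. \<bar>f \<omega>\<bar> \<le> (B::real)"
  shows "integrable M f"
  using assms integrable_bdd by metis

lemma int_prod_bdd:
  fixes f g :: "'w \<Rightarrow> real"
  assumes P: "prob_space M" and fm: "f \<in> borel_measurable M" and gm: "g \<in> borel_measurable M"
    and fb: "\<exists>B. \<forall>\<omega>\<in>space M. \<bar>f \<omega>\<bar> \<le> B" and gb: "\<exists>B. \<forall>\<omega>\<in>space M. \<bar>g \<omega>\<bar> \<le> B"
  shows "integrable M (\<lambda>\<omega>. f \<omega> * g \<omega>)"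
proof -
  obtain B1 where B1: "\<forall>\<omega>\<in>space M. \<bar>f \<omega>\<bar> \<le> B1" using fb by auto
  obtain B2 where B2: "\<forall>\<omega>\<in>space M. \<bar>g \<omega>\<bar> \<le> B2" using gb by auto
  show ?thesis
  proof (rule integrable_bdd[OF P, where B="B1*B2"])
    show "(\<lambda>\<omega>. f \<omega> * g \<omega>) \<in> borel_measurable M" using fm gm by measurable
    fix \<omega> assume w: "\<omega> \<in> space M"
    have "\<bar>f \<omega>\<bar> \<le> B1" "\<bar>g \<omega>\<bar> \<le> B2" using B1 B2 w by auto
    then show "\<bar>f \<omega> * g \<omega>\<bar> \<le> B1 * B2" by (simp add: abs_mult mult_mono')
  qed
qed

lemma ce_wsum:
  assumes P: "prob_space M" and sub: "subalgebra M G" and fin: "finite I"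
    and cm: "\<And>i. i \<in> I \<Longrightarrow> c i \<in> borel_measurable G"
    and Ym: "\<And>i. i \<in> I \<Longrightarrow> Y i \<in> borel_measurable M"
    and cb: "\<And>i. i \<in> I \<Longrightarrow> \<exists>B. \<forall>\<omega>\<in>space M. \<bar>c i \<omega>\<bar> \<le> B"
    and Yb: "\<And>i. i \<in> I \<Longrightarrow> \<exists>B. \<forall>\<omega>\<in>space M. \<bar>Y i \<omega>\<bar> \<le> B"
  shows "AE \<omega> in M. real_cond_exp M G (\<lambda>\<omega>. \<Sum>i\<in>I. c i \<omega> * Y i \<omega>) \<omega>
           = (\<Sum>i\<in>I. c i \<omega> * real_cond_exp M G (Y i) \<omega>)"
  using fin cm Ym cb Yb
proof (induction I rule: finite_induct)
  case empty
  have sfs: "sigma_finite_subalgebra M G" by (rule sfs_of[OF P sub])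
  have "AE \<omega> in M. real_cond_exp M G (\<lambda>\<omega>. 0) \<omega> = 0"
    by (rule sigma_finite_subalgebra.real_cond_exp_F_meas[OF sfs]) auto
  then show ?case by simp
next
  case (insert j I)
  have sfs: "sigma_finite_subalgebra M G" by (rule sfs_of[OF P sub])
  have IH: "AE \<omega> in M. real_cond_exp M G (\<lambda>\<omega>. \<Sum>i\<in>I. c i \<omega> * Y i \<omega>) \<omega>
           = (\<Sum>i\<in>I. c i \<omega> * real_cond_exp M G (Y i) \<omega>)"
    using insert by auto
  have intp: "integrable M (\<lambda>\<omega>. c i \<omega> * Y i \<omega>)" if i: "i \<in> insert j I" for i
  proof (rule int_prod_bdd[OF P])
    show "c i \<in> borel_measurable M" using insert.prems(1) i by (intro measurable_from_subalg[OF sub]) auto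
  qed (use insert.prems i in auto)
  have intj: "integrable M (\<lambda>\<omega>. c j \<omega> * Y j \<omega>)" using intp by simp
  have intI: "integrable M (\<lambda>\<omega>. \<Sum>i\<in>I. c i \<omega> * Y i \<omega>)" using intp by auto
  have A1: "AE \<omega> in M. real_cond_exp M G (\<lambda>\<omega>. c j \<omega> * Y j \<omega> + (\<Sum>i\<in>I. c i \<omega> * Y i \<omega>)) \<omega>
     = real_cond_exp M G (\<lambda>\<omega>. c j \<omega> * Y j \<omega>) \<omega> + real_cond_exp M G (\<lambda>\<omega>. \<Sum>i\<in>I. c i \<omega> * Y i \<omega>) \<omega>"
    by (rule sigma_finite_subalgebra.real_cond_exp_add[OF sfs intj intI])
  have A2: "AE \<omega> in M. real_cond_exp M G (\<lambda>\<omega>. c j \<omega> * Y j \<omega>) \<omega> = c j \<omega> * real_cond_exp M G (Y j) \<omega>"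
    by (rule sigma_finite_subalgebra.real_cond_exp_mult[OF sfs]) (use insert.prems intj in auto)
  have eq: "(\<lambda>\<omega>. \<Sum>i\<in>insert j I. c i \<omega> * Y i \<omega>) = (\<lambda>\<omega>. c j \<omega> * Y j \<omega> + (\<Sum>i\<in>I. c i \<omega> * Y i \<omega>))"
    using insert.hyps by simp
  show ?case unfolding eq using A1 A2 IH by eventually_elim (simp add: insert.hyps)
qed

lemma ce_affine:
  assumes P: "prob_space M" and sub: "subalgebra M G" and fin: "finite I"
    and c0m: "c0 \<in> borel_measurable G"
    and c0b: "\<exists>B. \<forall>\<omega>\<in>space M. \<bar>c0 \<omega>\<bar> \<le> B"
    and cm: "\<And>i. i \<in> I \<Longrightarrow> c i \<in> borel_measurable G"
    and Ym: "\<And>i. i \<in> I \<Longrightarrow> Y i \<in> borel_measurable M"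
    and cb: "\<And>i. i \<in> I \<Longrightarrow> \<exists>B. \<forall>\<omega>\<in>space M. \<bar>c i \<omega>\<bar> \<le> B"
    and Yb: "\<And>i. i \<in> I \<Longrightarrow> \<exists>B. \<forall>\<omega>\<in>space M. \<bar>Y i \<omega>\<bar> \<le> B"
  shows "AE \<omega> in M. real_cond_exp M G (\<lambda>\<omega>. c0 \<omega> + (\<Sum>i\<in>I. c i \<omega> * Y i \<omega>)) \<omega>
           = c0 \<omega> + (\<Sum>i\<in>I. c i \<omega> * real_cond_exp M G (Y i) \<omega>)"
proof -
  have sfs: "sigma_finite_subalgebra M G" by (rule sfs_of[OF P sub])
  have c0M: "c0 \<in> borel_measurable M" using measurable_from_subalg[OF sub c0m] .
  have int0: "integrable M c0" by (rule integrable_bdd'[OF P c0M c0b])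
  have intp: "integrable M (\<lambda>\<omega>. c i \<omega> * Y i \<omega>)" if i: "i \<in> I" for i
  proof (rule int_prod_bdd[OF P])
    show "c i \<in> borel_measurable M" using cm i by (intro measurable_from_subalg[OF sub]) auto
  qed (use Ym cb Yb i in auto)
  have intI: "integrable M (\<lambda>\<omega>. \<Sum>i\<in>I. c i \<omega> * Y i \<omega>)" using intp by auto
  have A1: "AE \<omega> in M. real_cond_exp M G (\<lambda>\<omega>. c0 \<omega> + (\<Sum>i\<in>I. c i \<omega> * Y i \<omega>)) \<omega>
     = real_cond_exp M G c0 \<omega> + real_cond_exp M G (\<lambda>\<omega>. \<Sum>i\<in>I. c i \<omega> * Y i \<omega>) \<omega>"
    by (rule sigma_finite_subalgebra.real_cond_exp_add[OF sfs int0 intI])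
  have A2: "AE \<omega> in M. real_cond_exp M G c0 \<omega> = c0 \<omega>"
    by (rule sigma_finite_subalgebra.real_cond_exp_F_meas[OF sfs int0 c0m])
  have A3: "AE \<omega> in M. real_cond_exp M G (\<lambda>\<omega>. \<Sum>i\<in>I. c i \<omega> * Y i \<omega>) \<omega>
           = (\<Sum>i\<in>I. c i \<omega> * real_cond_exp M G (Y i) \<omega>)"
    by (rule ce_wsum[OF P sub fin cm Ym cb Yb])
  show ?thesis using A1 A2 A3 by eventually_elim simp
qed



definition detp :: "('x \<Rightarrow> 'a) \<Rightarrow> 'x \<Rightarrow> 'a \<Rightarrow> real" where
  "detp s = (\<lambda>x a. if a = s x then 1 else 0)"

definition lin :: "'x set \<Rightarrow> ('x \<Rightarrow> 'a set) \<Rightarrow> ('x \<Rightarrow> ('x \<times> 'a) list) \<Rightarrow> ('x \<Rightarrow> 'a \<Rightarrow> real)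
   \<Rightarrow> ('x \<Rightarrow> 'a \<Rightarrow> real) \<Rightarrow> real" where
  "lin X Act hist c mu = (\<Sum>x\<in>X. \<Sum>a\<in>Act x. c x a * real_plan hist mu x a)"

lemma real_plan_path:
  "real_plan hist mu x a = prod_list (map (\<lambda>(y, b). mu y b) (hist x @ [(x, a)]))"
  by (simp add: real_plan_def)

lemma path_facts:
  assumes g: "game_struct X Act dep H hist" and x: "x \<in> X" and a: "a \<in> Act x"
  shows "distinct (map fst (hist x @ [(x, a)]))"
    and "\<forall>p\<in>set (hist x @ [(x, a)]). fst p \<in> X \<and> snd p \<in> Act (fst p)"
proof -
  have len: "length (hist x) = dep x - 1" and d1: "1 \<le> dep x"
    and ent: "\<And>i. i < length (hist x) \<Longrightarrow> fst (hist x ! i) \<in> X \<and> dep (fst (hist x ! i)) = i + 1 \<and>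
            snd (hist x ! i) \<in> Act (fst (hist x ! i))"
    using g x unfolding game_struct_def by auto
  have "map dep (map fst (hist x @ [(x, a)])) = [1..<dep x + 1]"
  proof (rule nth_equalityI)
    show "length (map dep (map fst (hist x @ [(x, a)]))) = length [1..<dep x + 1]" using len d1 by simp
    fix i assume "i < length (map dep (map fst (hist x @ [(x, a)])))"
    then have i: "i < dep x" using len d1 by simp
    show "map dep (map fst (hist x @ [(x, a)])) ! i = [1..<dep x + 1] ! i"
    proof (cases "i < length (hist x)")
      case True
      then show ?thesis using ent[OF True] i len by (simp add: nth_append)
    next
      case False
      then have "i = length (hist x)" using i len d1 by simp
      then show ?thesis using len d1 by (simp add: nth_append)
    qed
  qed
  then have "distinct (map dep (map fst (hist x @ [(x, a)])))" by (metis distinct_upt)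
  then show "distinct (map fst (hist x @ [(x, a)]))" by (rule distinct_map[THEN iffD1, THEN conjunct1])
  show "\<forall>p\<in>set (hist x @ [(x, a)]). fst p \<in> X \<and> snd p \<in> Act (fst p)"
    using ent x a by (auto simp: in_set_conv_nth) (metis fst_conv snd_conv)+
qed

lemma prod_indep:
  assumes "x \<notin> fst ` set P"
  shows "prod_list (map (\<lambda>(z, b). (mu(x := r)) z b) P) = prod_list (map (\<lambda>(z, b). mu z b) P)"
  using assms by (induction P) auto

lemma prod_indep':
  assumes "x \<notin> fst ` set P"
  shows "prod_list (map (\<lambda>(z, y). (if z = x then R else mu z) y) P) = prod_list (map (\<lambda>(z, b). mu z b) P)"
  using assms by (induction P) auto

lemma path_lin:
  fixes mu :: "'x \<Rightarrow> 'a \<Rightarrow> real"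
  assumes "distinct (map fst P)" "\<forall>p\<in>set P. fst p = x \<longrightarrow> snd p \<in> A" "finite A" "sum r A = 1"
  shows "prod_list (map (\<lambda>(z, b). (mu(x := r)) z b) P)
       = (\<Sum>b0\<in>A. r b0 * prod_list (map (\<lambda>(z, b). (mu(x := (\<lambda>b. if b = b0 then 1 else 0))) z b) P))"
  using assms(1,2)
proof (induction P)
  case Nil
  then show ?case using assms(4) by simp
next
  case (Cons p P)
  obtain z b where p: "p = (z, b)" by (cases p)
  show ?case
  proof (cases "z = x")
    case True
    have nx: "x \<notin> fst ` set P" using Cons.prems(1) p True by auto
    have bA: "b \<in> A" using Cons.prems(2) p True by auto
    let ?Q = "prod_list (map (\<lambda>(z, b). mu z b) P)"
    have "(\<Sum>b0\<in>A. r b0 * prod_list (map (\<lambda>(z, b). (mu(x := (\<lambda>b. if b = b0 then 1 else 0))) z b) (p # P)))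
        = (\<Sum>b0\<in>A. (if b0 = b then r b * ?Q else 0))"
      by (intro sum.cong refl) (auto simp: p True prod_indep[OF nx] prod_indep'[OF nx])
    also have "\<dots> = r b * ?Q" using bA assms(3) by simp
    finally show ?thesis by (simp add: p True prod_indep[OF nx] prod_indep'[OF nx])
  next
    case False
    have IH: "prod_list (map (\<lambda>(z, b). (mu(x := r)) z b) P)
       = (\<Sum>b0\<in>A. r b0 * prod_list (map (\<lambda>(z, b). (mu(x := (\<lambda>b. if b = b0 then 1 else 0))) z b) P))"
      using Cons by auto
    show ?thesis using False IH by (simp add: p sum_distrib_left mult.left_commute)
  qed
qed

lemma policy_le1:
  assumes "mu \<in> policies X Act" "x \<in> X" "a \<in> Act x" "finite (Act x)"
  shows "0 \<le> mu x a" "mu x a \<le> 1"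
proof -
  have nn: "\<forall>b\<in>Act x. 0 \<le> mu x b" and s: "(\<Sum>b\<in>Act x. mu x b) = 1"
    using assms unfolding policies_def by auto
  show "0 \<le> mu x a" using nn assms by auto
  show "mu x a \<le> 1" using member_le_sum[of a "Act x" "mu x"] nn s assms by auto
qed

lemma lin_affine:
  assumes g: "game_struct X Act dep H hist" and x: "x \<in> X" and r: "sum r (Act x) = 1"
  shows "lin X Act hist c (mu(x := r)) = (\<Sum>b0\<in>Act x. r b0 * lin X Act hist c (mu(x := (\<lambda>b. if b = b0 then 1 else 0))))"
proof -
  have fin: "finite (Act x)" using g x unfolding game_struct_def by auto
  have finX: "finite X" using g unfolding game_struct_def by auto
  have "lin X Act hist c (mu(x := r)) = (\<Sum>y\<in>X. \<Sum>a\<in>Act y. c y a * (\<Sum>b0\<in>Act x. r b0 *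
      real_plan hist (mu(x := (\<lambda>b. if b = b0 then 1 else 0))) y a))"
    unfolding lin_def
  proof (intro sum.cong refl)
    fix y a assume y: "y \<in> X" and a: "a \<in> Act y"
    have pf: "distinct (map fst (hist y @ [(y, a)]))" "\<forall>p\<in>set (hist y @ [(y, a)]). fst p \<in> X \<and> snd p \<in> Act (fst p)"
      using path_facts[OF g y a] by auto
    show "c y a * real_plan hist (mu(x := r)) y a = c y a * (\<Sum>b0\<in>Act x. r b0 *
      real_plan hist (mu(x := (\<lambda>b. if b = b0 then 1 else 0))) y a)"
      unfolding real_plan_path
      by (subst path_lin[OF pf(1) _ fin r]) (use pf(2) in auto)
  qed
  also have "\<dots> = (\<Sum>b0\<in>Act x. r b0 * lin X Act hist c (mu(x := (\<lambda>b. if b = b0 then 1 else 0))))"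
    unfolding lin_def sum_distrib_left
    by (subst sum.swap) (simp add: sum_distrib_left algebra_simps sum.swap[of _ "Act x"])
  finally show ?thesis .
qed



lemma min_avg:
  fixes v w :: "'b \<Rightarrow> real"
  assumes "finite A" "A \<noteq> {}" "\<forall>b\<in>A. 0 \<le> w b" "sum w A = 1"
  shows "\<exists>b\<in>A. v b \<le> (\<Sum>b\<in>A. w b * v b)"
proof -
  have "Min (v ` A) \<in> v ` A" using assms by (intro Min_in) auto
  then obtain b where b0: "b \<in> A" "v b = Min (v ` A)" by auto
  have b: "b \<in> A" "\<forall>b'\<in>A. v b \<le> v b'" using b0 assms(1) by auto
  have "v b = (\<Sum>b'\<in>A. w b' * v b)" using assms(4) by (simp add: sum_distrib_right[symmetric])
  also have "\<dots> \<le> (\<Sum>b'\<in>A. w b' * v b')"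
    by (intro sum_mono mult_left_mono) (use b assms(3) in auto)
  finally show ?thesis using b by blast
qed

lemma plan_cong:
  assumes g: "game_struct X Act dep H hist" and x: "x \<in> X" and a: "a \<in> Act x"
    and eq: "\<And>z. z \<in> X \<Longrightarrow> mu1 z = mu2 z"
  shows "real_plan hist mu1 x a = real_plan hist mu2 x a"
proof -
  have "\<forall>p\<in>set (hist x @ [(x, a)]). fst p \<in> X" using path_facts(2)[OF g x a] by auto
  then have "map (\<lambda>(y, b). mu1 y b) (hist x @ [(x, a)]) = map (\<lambda>(y, b). mu2 y b) (hist x @ [(x, a)])"
    using eq by (intro map_cong refl) auto
  then show ?thesis unfolding real_plan_path by (rule arg_cong[where f=prod_list])
qed

lemma detp_policy:
  assumes g: "game_struct X Act dep H hist" and s: "s \<in> PiE X Act"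
  shows "detp s \<in> policies X Act"
proof -
  have "\<And>x. x \<in> X \<Longrightarrow> finite (Act x) \<and> s x \<in> Act x" using g s unfolding game_struct_def by auto
  then show ?thesis unfolding policies_def detp_def by (simp add: sum.delta')
qed



lemma vertex:
  assumes g: "game_struct X Act dep H hist" and mu: "mu \<in> policies X Act"
  shows "\<exists>s\<in>PiE X Act. lin X Act hist c (detp s) \<le> lin X Act hist c mu"
proof -
  have finX: "finite X" using g unfolding game_struct_def by auto
  have actf: "\<And>x. x \<in> X \<Longrightarrow> finite (Act x) \<and> Act x \<noteq> {}" using g unfolding game_struct_def by auto
  have claim: "\<exists>mu' \<in> policies X Act. lin X Act hist c mu' \<le> lin X Act hist c mu \<and>
      (\<forall>x\<in>Y. \<exists>b\<in>Act x. mu' x = (\<lambda>a. if a = b then 1 else 0))" if "Y \<subseteq> X" for Y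
  proof -
    have "finite Y" using that finX finite_subset by blast
    then show ?thesis using that
    proof (induction Y rule: finite_induct)
      case empty
      then show ?case using mu by auto
    next
      case (insert x Y)
      then obtain mu' where mu': "mu' \<in> policies X Act" "lin X Act hist c mu' \<le> lin X Act hist c mu"
        "\<forall>y\<in>Y. \<exists>b\<in>Act y. mu' y = (\<lambda>a. if a = b then 1 else 0)" by auto
      have x: "x \<in> X" using insert by auto
      have r1: "sum (mu' x) (Act x) = 1" and r0: "\<forall>b\<in>Act x. 0 \<le> mu' x b"
        using mu' x unfolding policies_def by auto
      have "lin X Act hist c mu' = lin X Act hist c (mu'(x := mu' x))" by simp
      also have "\<dots> = (\<Sum>b0\<in>Act x. mu' x b0 * lin X Act hist c (mu'(x := (\<lambda>b. if b = b0 then 1 else 0))))"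
        by (rule lin_affine[OF g x r1])
      finally have eq: "lin X Act hist c mu' = \<dots>" .
      obtain b where b: "b \<in> Act x"
        "lin X Act hist c (mu'(x := (\<lambda>a. if a = b then 1 else 0))) \<le> lin X Act hist c mu'"
        using min_avg[of "Act x" "mu' x" "\<lambda>b0. lin X Act hist c (mu'(x := (\<lambda>b. if b = b0 then 1 else 0)))"]
          actf[OF x] r0 r1 eq by auto
      let ?m = "mu'(x := (\<lambda>a. if a = b then 1 else 0))"
      have "?m \<in> policies X Act" using mu'(1) b(1) actf[OF x] unfolding policies_def by auto
      moreover have "lin X Act hist c ?m \<le> lin X Act hist c mu" using b(2) mu'(2) by linarith
      moreover have "\<forall>y\<in>insert x Y. \<exists>b\<in>Act y. ?m y = (\<lambda>a. if a = b then 1 else 0)"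
        using mu'(3) b(1) insert.hyps(2) by auto
      ultimately show ?case by blast
    qed
  qed
  obtain mu' where mu': "mu' \<in> policies X Act" "lin X Act hist c mu' \<le> lin X Act hist c mu"
    "\<forall>x\<in>X. \<exists>b\<in>Act x. mu' x = (\<lambda>a. if a = b then 1 else 0)" using claim[of X] by auto
  define s where "s = restrict (\<lambda>x. SOME b. b \<in> Act x \<and> mu' x = (\<lambda>a. if a = b then 1 else 0)) X"
  have sx: "\<And>x. x \<in> X \<Longrightarrow> s x \<in> Act x \<and> mu' x = (\<lambda>a. if a = s x then 1 else 0)"
  proof -
    fix x assume x: "x \<in> X"
    then show "s x \<in> Act x \<and> mu' x = (\<lambda>a. if a = s x then 1 else 0)"
      unfolding s_def using someI_ex[OF mu'(3)[rule_format, OF x, unfolded Bex_def]] by auto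
  qed
  have sP: "s \<in> PiE X Act" using sx unfolding s_def by auto
  have eqs: "lin X Act hist c (detp s) = lin X Act hist c mu'"
    unfolding lin_def
    by (intro sum.cong refl arg_cong2[where f="(*)"] plan_cong[OF g]) (auto simp: detp_def sx)
  show ?thesis
  proof (rule bexI[OF _ sP])
    show "lin X Act hist c (detp s) \<le> lin X Act hist c mu" using eqs mu'(2) by simp
  qed
qed

lemma G_eq:
  fixes l :: "nat \<Rightarrow> 'x \<Rightarrow> 'a \<Rightarrow> real"
  shows "(\<Sum>t\<in>I. ip X Act (l t) (\<lambda>x a. P t x a - real_plan hist mu x a))
       = (\<Sum>t\<in>I. ip X Act (l t) (P t)) - lin X Act hist (\<lambda>x a. \<Sum>t\<in>I. l t x a) mu"
proof -
  have "(\<Sum>t\<in>I. ip X Act (l t) (\<lambda>x a. P t x a - real_plan hist mu x a))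
      = (\<Sum>t\<in>I. ip X Act (l t) (P t)) - (\<Sum>t\<in>I. \<Sum>x\<in>X. \<Sum>a\<in>Act x. l t x a * real_plan hist mu x a)"
    unfolding ip_def by (simp add: right_diff_distrib sum_subtractf)
  also have "(\<Sum>t\<in>I. \<Sum>x\<in>X. \<Sum>a\<in>Act x. l t x a * real_plan hist mu x a)
      = lin X Act hist (\<lambda>x a. \<Sum>t\<in>I. l t x a) mu"
    unfolding lin_def sum_distrib_right
    by (subst sum.swap) (simp add: sum.swap[of _ I])
  finally show ?thesis .
qed

lemma regret_eq:
  assumes g: "game_struct X Act dep H hist"
  shows "regret X Act hist T l m = Max ((\<lambda>s. \<Sum>t\<in>{1..T}. ip X Act (l t)
            (\<lambda>x a. real_plan hist (m t) x a - real_plan hist (detp s) x a)) ` PiE X Act)"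
    and "d \<in> policies X Act \<Longrightarrow> (\<Sum>t\<in>{1..T}. ip X Act (l t) (\<lambda>x a. real_plan hist (m t) x a - real_plan hist d x a))
            \<le> regret X Act hist T l m"
proof -
  define Gf where "Gf = (\<lambda>d. \<Sum>t\<in>{1..T}. ip X Act (l t) (\<lambda>x a. real_plan hist (m t) x a - real_plan hist d x a))"
  define V where "V = Max (Gf ` detp ` PiE X Act)"
  have finX: "finite X" using g unfolding game_struct_def by auto
  have actf: "\<And>x. x \<in> X \<Longrightarrow> finite (Act x) \<and> Act x \<noteq> {}" using g unfolding game_struct_def by auto
  have finP: "finite (PiE X Act)" using finX actf by (intro finite_PiE) auto
  have neP: "PiE X Act \<noteq> {}" using actf by (simp add: PiE_eq_empty_iff)
  have le: "Gf d \<le> V" if d: "d \<in> policies X Act" for d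
  proof -
    obtain s where s: "s \<in> PiE X Act" "lin X Act hist (\<lambda>x a. \<Sum>t\<in>{1..T}. l t x a) (detp s)
         \<le> lin X Act hist (\<lambda>x a. \<Sum>t\<in>{1..T}. l t x a) d" using vertex[OF g d] by blast
    have "Gf d \<le> Gf (detp s)" unfolding Gf_def G_eq using s(2) by linarith
    also have "\<dots> \<le> V" unfolding V_def using finP s(1) by (intro Max_ge) auto
    finally show ?thesis .
  qed
  have ne: "policies X Act \<noteq> {}" using neP detp_policy[OF g] by blast
  have bdd: "bdd_above (Gf ` policies X Act)" using le by (intro bdd_aboveI2) auto
  have "regret X Act hist T l m = (SUP d\<in>policies X Act. Gf d)" unfolding regret_def Gf_def by simp
  also have "\<dots> = V"
  proof (rule antisym)
    show "(SUP d\<in>policies X Act. Gf d) \<le> V" using ne le by (intro cSUP_least) auto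
    have "V \<in> Gf ` detp ` PiE X Act" unfolding V_def using finP neP by (intro Max_in) auto
    then obtain s where s: "s \<in> PiE X Act" "V = Gf (detp s)" by auto
    show "V \<le> (SUP d\<in>policies X Act. Gf d)" unfolding s(2)
      by (rule cSUP_upper[OF detp_policy[OF g s(1)] bdd])
  qed
  finally have R: "regret X Act hist T l m = V" .
  show "regret X Act hist T l m = Max ((\<lambda>s. \<Sum>t\<in>{1..T}. ip X Act (l t)
            (\<lambda>x a. real_plan hist (m t) x a - real_plan hist (detp s) x a)) ` PiE X Act)"
    unfolding R V_def Gf_def image_image by simp
  show "d \<in> policies X Act \<Longrightarrow> (\<Sum>t\<in>{1..T}. ip X Act (l t) (\<lambda>x a. real_plan hist (m t) x a - real_plan hist d x a))
            \<le> regret X Act hist T l m"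
    using le R unfolding Gf_def by simp
qed



lemma meas_prod_list:
  fixes f :: "'w \<Rightarrow> 'p \<Rightarrow> real"
  shows "(\<And>p. p \<in> set L \<Longrightarrow> (\<lambda>\<omega>. f \<omega> p) \<in> borel_measurable N) \<Longrightarrow>
    (\<lambda>\<omega>. prod_list (map (f \<omega>) L)) \<in> borel_measurable N"
proof (induction L)
  case Nil
  then show ?case by simp
next
  case (Cons p L)
  have a: "(\<lambda>\<omega>. f \<omega> p) \<in> borel_measurable N" using Cons.prems by auto
  have b: "(\<lambda>\<omega>. prod_list (map (f \<omega>) L)) \<in> borel_measurable N" using Cons by auto
  show ?case using a b by simp
qed

lemma plan_meas:
  assumes g: "game_struct X Act dep H hist" and x: "x \<in> X" and a: "a \<in> Act x"
    and m: "\<And>y b. y \<in> X \<Longrightarrow> b \<in> Act y \<Longrightarrow> (\<lambda>\<omega>. m \<omega> y b) \<in> borel_measurable N"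
  shows "(\<lambda>\<omega>. real_plan hist (m \<omega>) x a) \<in> borel_measurable N"
  unfolding real_plan_path
proof (rule meas_prod_list[where f="\<lambda>\<omega> p. case p of (y, b) \<Rightarrow> m \<omega> y b"])
  fix p assume p: "p \<in> set (hist x @ [(x, a)])"
  obtain y b where yb: "p = (y, b)" by (cases p)
  have "y \<in> X" "b \<in> Act y" using path_facts(2)[OF g x a] p yb by auto
  then show "(\<lambda>\<omega>. case p of (y, b) \<Rightarrow> m \<omega> y b) \<in> borel_measurable N" using m yb by simp
qed

lemma prod_list_01:
  fixes g :: "'p \<Rightarrow> real"
  shows "(\<And>p. p \<in> set L \<Longrightarrow> 0 \<le> g p \<and> g p \<le> 1) \<Longrightarrow> 0 \<le> prod_list (map g L) \<and> prod_list (map g L) \<le> 1"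
proof (induction L)
  case (Cons p L)
  then have "0 \<le> g p" "g p \<le> 1" "0 \<le> prod_list (map g L)" "prod_list (map g L) \<le> 1" by auto
  then show ?case by (simp add: mult_le_one)
qed simp

lemma prod_list_pos:
  fixes g :: "'p \<Rightarrow> real"
  shows "(\<And>p. p \<in> set L \<Longrightarrow> 0 < g p) \<Longrightarrow> 0 < prod_list (map g L)"
  by (induction L) auto

lemma plan_01:
  assumes g: "game_struct X Act dep H hist" and mu: "mu \<in> policies X Act" and x: "x \<in> X" and a: "a \<in> Act x"
  shows "0 \<le> real_plan hist mu x a" "real_plan hist mu x a \<le> 1"
proof -
  have "0 \<le> prod_list (map (\<lambda>(y, b). mu y b) (hist x @ [(x, a)])) \<and> prod_list (map (\<lambda>(y, b). mu y b) (hist x @ [(x, a)])) \<le> 1"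
  proof (rule prod_list_01)
    fix p assume p: "p \<in> set (hist x @ [(x, a)])"
    obtain y b where yb: "p = (y, b)" by (cases p)
    have "y \<in> X" "b \<in> Act y" using path_facts(2)[OF g x a] p yb by auto
    moreover have "finite (Act y)" using g \<open>y \<in> X\<close> unfolding game_struct_def by auto
    ultimately show "0 \<le> (case p of (y, b) \<Rightarrow> mu y b) \<and> (case p of (y, b) \<Rightarrow> mu y b) \<le> 1"
      using policy_le1[OF mu] yb by auto
  qed
  then show "0 \<le> real_plan hist mu x a" "real_plan hist mu x a \<le> 1" unfolding real_plan_path by auto
qed

lemma plan_pos:
  assumes g: "game_struct X Act dep H hist" and mu: "positive_policy X Act mu" and x: "x \<in> X" and a: "a \<in> Act x"
  shows "0 < real_plan hist mu x a"
  unfolding real_plan_path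
proof (rule prod_list_pos)
  fix p assume p: "p \<in> set (hist x @ [(x, a)])"
  obtain y b where yb: "p = (y, b)" by (cases p)
  have "y \<in> X" "b \<in> Act y" using path_facts(2)[OF g x a] p yb by auto
  then show "0 < (case p of (y, b) \<Rightarrow> mu y b)" using mu yb unfolding positive_policy_def by auto
qed

lemma card_hits:
  assumes "\<forall>x\<in>X. dep x \<in> {1..H}"
  shows "card {p \<in> Sigma X Act. xs (dep (fst p)) = fst p \<and> as (dep (fst p)) = snd p} \<le> H"
proof -
  have "{p \<in> Sigma X Act. xs (dep (fst p)) = fst p \<and> as (dep (fst p)) = snd p} \<subseteq> (\<lambda>h. (xs h, as h)) ` {1..H}"
  proof
    fix p assume p: "p \<in> {p \<in> Sigma X Act. xs (dep (fst p)) = fst p \<and> as (dep (fst p)) = snd p}"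
    then have "dep (fst p) \<in> {1..H}" using assms by auto
    moreover have "p = (xs (dep (fst p)), as (dep (fst p)))" using p by (cases p) auto
    ultimately show "p \<in> (\<lambda>h. (xs h, as h)) ` {1..H}" by blast
  qed
  then have "card {p \<in> Sigma X Act. xs (dep (fst p)) = fst p \<and> as (dep (fst p)) = snd p} \<le> card ((\<lambda>h. (xs h, as h)) ` {1..H})"
    by (intro card_mono) auto
  also have "\<dots> \<le> card {1..H}" by (rule card_image_le) auto
  finally show ?thesis by simp
qed

lemma sum_hits_le:
  fixes f :: "'p \<Rightarrow> real"
  assumes "finite S" "card {p\<in>S. C p} \<le> H" "\<And>p. p \<in> S \<Longrightarrow> C p \<Longrightarrow> f p \<le> 1"
  shows "(\<Sum>p\<in>S. if C p then f p else 0) \<le> real H"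
proof -
  have "(\<Sum>p\<in>S. if C p then f p else 0) = (\<Sum>p\<in>{p\<in>S. C p}. f p)" using assms(1) by (simp add: sum.inter_filter)
  also have "\<dots> \<le> (\<Sum>p\<in>{p\<in>S. C p}. 1)" by (intro sum_mono) (use assms(3) in auto)
  also have "\<dots> = real (card {p\<in>S. C p})" by simp
  also have "\<dots> \<le> real H" using assms(2) by simp
  finally show ?thesis .
qed

lemma sq_hits:
  fixes w :: "'p \<Rightarrow> real"
  assumes "finite S" "card {p\<in>S. C p} \<le> H"
  shows "(\<Sum>p\<in>S. if C p then w p else 0)\<^sup>2 \<le> real H * (\<Sum>p\<in>S. if C p then (w p)\<^sup>2 else 0)"
proof -
  have e1: "(\<Sum>p\<in>S. if C p then w p else 0) = (\<Sum>p\<in>{p\<in>S. C p}. w p)" using assms(1) by (simp add: sum.inter_filter)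
  have e2: "(\<Sum>p\<in>S. if C p then (w p)\<^sup>2 else 0) = (\<Sum>p\<in>{p\<in>S. C p}. (w p)\<^sup>2)" using assms(1) by (simp add: sum.inter_filter)
  have "(\<Sum>p\<in>{p\<in>S. C p}. w p)\<^sup>2 \<le> (\<Sum>p\<in>{p\<in>S. C p}. (w p)\<^sup>2) * real (card {p\<in>S. C p})"
    by (rule sum_squared_le_sum_of_squares)
  also have "\<dots> \<le> (\<Sum>p\<in>{p\<in>S. C p}. (w p)\<^sup>2) * real H"
    using assms(2) by (intro mult_left_mono) (auto intro: sum_nonneg)
  finally show ?thesis unfolding e1 e2 by (simp add: mult.commute)
qed



lemma step_Z1:
  fixes Y e :: "'w \<Rightarrow> real"
  assumes P: "prob_space M" and sub: "subalgebra M G"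
    and Ym: "Y \<in> borel_measurable M" and Y01: "\<And>\<omega>. \<omega> \<in> space M \<Longrightarrow> 0 \<le> Y \<omega> \<and> Y \<omega> \<le> 1"
    and ce: "AE \<omega> in M. real_cond_exp M G Y \<omega> = e \<omega>"
    and em: "e \<in> borel_measurable G" and e01: "\<And>\<omega>. \<omega> \<in> space M \<Longrightarrow> 0 \<le> e \<omega> \<and> e \<omega> \<le> 1"
    and g0: "0 \<le> \<gamma>" and g1: "\<gamma> \<le> 1"
  shows "AE \<omega> in M. real_cond_exp M G (\<lambda>\<omega>. exp (\<gamma> * Y \<omega> - (\<gamma> + \<gamma>\<^sup>2) * e \<omega>)) \<omega> \<le> 1"
proof -
  define b where "b = \<gamma> + \<gamma>\<^sup>2"
  have b0: "0 \<le> b" using g0 by (simp add: b_def)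
  have "\<gamma>\<^sup>2 \<le> 1" using g0 g1 by (simp add: power_le_one)
  then have b2: "b \<le> 2" using g1 unfolding b_def by linarith
  define c0 where "c0 = (\<lambda>\<omega>. exp (- b * e \<omega>))"
  define c where "c = (\<lambda>(i::unit) \<omega>. exp (- b * e \<omega>) * b)"
  define Y' where "Y' = (\<lambda>(i::unit). Y)"
  have eM: "e \<in> borel_measurable M" by (rule measurable_from_subalg[OF sub em])
  have c0m: "c0 \<in> borel_measurable G" unfolding c0_def using em by measurable
  have cm: "c i \<in> borel_measurable G" for i unfolding c_def using em by measurable
  have c0b: "\<forall>\<omega>\<in>space M. \<bar>c0 \<omega>\<bar> \<le> 1" unfolding c0_def using e01 b0 by (auto simp: mult_nonneg_nonneg)
  have cb: "\<forall>\<omega>\<in>space M. \<bar>c i \<omega>\<bar> \<le> 2" for i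
  proof
    fix \<omega> assume w: "\<omega> \<in> space M"
    have "exp (- b * e \<omega>) \<le> 1" using e01[OF w] b0 by (simp add: mult_nonneg_nonneg)
    then have "exp (- b * e \<omega>) * b \<le> 1 * 2" using b0 b2 by (intro mult_mono) auto
    then show "\<bar>c i \<omega>\<bar> \<le> 2" unfolding c_def using b0 by simp
  qed
  have Yb: "\<forall>\<omega>\<in>space M. \<bar>Y' i \<omega>\<bar> \<le> 1" for i unfolding Y'_def using Y01 by auto
  have aff: "AE \<omega> in M. real_cond_exp M G (\<lambda>\<omega>. c0 \<omega> + (\<Sum>i\<in>{()}. c i \<omega> * Y' i \<omega>)) \<omega>
           = c0 \<omega> + (\<Sum>i\<in>{()}. c i \<omega> * real_cond_exp M G (Y' i) \<omega>)"
    by (rule ce_affine[OF P sub]) (use c0m c0b cm cb Ym Yb Y'_def in auto)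
  have ptw: "exp (\<gamma> * Y \<omega> - b * e \<omega>) \<le> c0 \<omega> + (\<Sum>i\<in>{()}. c i \<omega> * Y' i \<omega>)" if w: "\<omega> \<in> space M" for \<omega>
  proof -
    have y: "0 \<le> Y \<omega>" "Y \<omega> \<le> 1" using Y01[OF w] by auto
    have u0: "0 \<le> \<gamma> * Y \<omega>" using g0 y by simp
    have u1: "\<gamma> * Y \<omega> \<le> 1" using g0 g1 y by (simp add: mult_le_one)
    have "exp (\<gamma> * Y \<omega>) \<le> 1 + \<gamma> * Y \<omega> + (\<gamma> * Y \<omega>)\<^sup>2" by (rule exp_bound[OF u0 u1])
    also have "(\<gamma> * Y \<omega>)\<^sup>2 \<le> \<gamma>\<^sup>2 * Y \<omega>"
    proof -
      have yy: "Y \<omega> * Y \<omega> \<le> Y \<omega>" using y by (simp add: mult_left_le)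
      have "(\<gamma> * Y \<omega>)\<^sup>2 = \<gamma>\<^sup>2 * (Y \<omega> * Y \<omega>)" by (simp add: power2_eq_square algebra_simps)
      also have "\<dots> \<le> \<gamma>\<^sup>2 * Y \<omega>" using yy by (intro mult_left_mono) auto
      finally show ?thesis .
    qed
    finally have "exp (\<gamma> * Y \<omega>) \<le> 1 + b * Y \<omega>" unfolding b_def by (simp add: algebra_simps)
    then have "exp (- b * e \<omega>) * exp (\<gamma> * Y \<omega>) \<le> exp (- b * e \<omega>) * (1 + b * Y \<omega>)"
      by (simp add: mult_left_mono)
    then show ?thesis unfolding c0_def c_def Y'_def by (simp add: exp_diff exp_minus algebra_simps divide_simps)
  qed
  have int1: "integrable M (\<lambda>\<omega>. exp (\<gamma> * Y \<omega> - b * e \<omega>))"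
  proof (rule integrable_bdd[OF P, where B="exp 1"])
    show "(\<lambda>\<omega>. exp (\<gamma> * Y \<omega> - b * e \<omega>)) \<in> borel_measurable M" using Ym eM by measurable
    fix \<omega> assume w: "\<omega> \<in> space M"
    have "\<gamma> * Y \<omega> \<le> 1" using Y01[OF w] g0 g1 by (simp add: mult_le_one)
    moreover have "0 \<le> b * e \<omega>" using e01[OF w] b0 by simp
    ultimately have "\<gamma> * Y \<omega> - b * e \<omega> \<le> 1" by linarith
    then show "\<bar>exp (\<gamma> * Y \<omega> - b * e \<omega>)\<bar> \<le> exp 1" by simp
  qed
  have c0M: "c0 \<in> borel_measurable M" by (rule measurable_from_subalg[OF sub c0m])
  have cM: "c () \<in> borel_measurable M" by (rule measurable_from_subalg[OF sub cm])
  have int2: "integrable M (\<lambda>\<omega>. c0 \<omega> + (\<Sum>i\<in>{()}. c i \<omega> * Y' i \<omega>))"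
  proof (rule integrable_bdd[OF P, where B="3"])
    show "(\<lambda>\<omega>. c0 \<omega> + (\<Sum>i\<in>{()}. c i \<omega> * Y' i \<omega>)) \<in> borel_measurable M"
      using c0M cM Ym unfolding Y'_def by simp
    fix \<omega> assume w: "\<omega> \<in> space M"
    have "\<bar>c0 \<omega>\<bar> \<le> 1" "\<bar>c () \<omega>\<bar> \<le> 2" "\<bar>Y' () \<omega>\<bar> \<le> 1" using c0b cb Yb w by auto
    then have "\<bar>c () \<omega>\<bar> * \<bar>Y' () \<omega>\<bar> \<le> 2 * 1" by (intro mult_mono) auto
    then have "\<bar>c () \<omega> * Y' () \<omega>\<bar> \<le> 2" by (simp add: abs_mult)
    then show "\<bar>c0 \<omega> + (\<Sum>i\<in>{()}. c i \<omega> * Y' i \<omega>)\<bar> \<le> 3" using \<open>\<bar>c0 \<omega>\<bar> \<le> 1\<close> by simp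
  qed
  have mono: "AE \<omega> in M. real_cond_exp M G (\<lambda>\<omega>. exp (\<gamma> * Y \<omega> - b * e \<omega>)) \<omega>
      \<le> real_cond_exp M G (\<lambda>\<omega>. c0 \<omega> + (\<Sum>i\<in>{()}. c i \<omega> * Y' i \<omega>)) \<omega>"
    by (rule sigma_finite_subalgebra.real_cond_exp_mono[OF sfs_of[OF P sub] _ int1 int2])
      (use ptw in \<open>intro AE_I2; auto\<close>)
  have "AE \<omega> in M. real_cond_exp M G (\<lambda>\<omega>. exp (\<gamma> * Y \<omega> - b * e \<omega>)) \<omega> \<le> 1"
    using mono aff ce
  proof eventually_elim
    case (elim \<omega>)
    have "c0 \<omega> + (\<Sum>i\<in>{()}. c i \<omega> * real_cond_exp M G (Y' i) \<omega>) = exp (- b * e \<omega>) * (1 + b * e \<omega>)"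
      using elim(3) unfolding c0_def c_def Y'_def by (simp add: algebra_simps)
    also have "\<dots> \<le> exp (- b * e \<omega>) * exp (b * e \<omega>)"
      by (intro mult_left_mono) (auto simp: exp_ge_add_one_self add.commute)
    also have "\<dots> = 1" by (simp add: exp_minus[symmetric] exp_add[symmetric])
    finally show ?case using elim(1,2) by simp
  qed
  then show ?thesis unfolding b_def .
qed



lemma step_Z0:
  fixes Y e w v :: "'i \<Rightarrow> 'w \<Rightarrow> real"
  assumes P: "prob_space M" and sub: "subalgebra M G" and fin: "finite I"
    and Ym: "\<And>i. i \<in> I \<Longrightarrow> Y i \<in> borel_measurable M"
    and Y01: "\<And>i \<omega>. i \<in> I \<Longrightarrow> \<omega> \<in> space M \<Longrightarrow> 0 \<le> Y i \<omega> \<and> Y i \<omega> \<le> 1"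
    and ce: "\<And>i. i \<in> I \<Longrightarrow> AE \<omega> in M. real_cond_exp M G (Y i) \<omega> = e i \<omega>"
    and em: "\<And>i. i \<in> I \<Longrightarrow> e i \<in> borel_measurable G"
    and e01: "\<And>i \<omega>. i \<in> I \<Longrightarrow> \<omega> \<in> space M \<Longrightarrow> 0 \<le> e i \<omega> \<and> e i \<omega> \<le> 1"
    and wm: "\<And>i. i \<in> I \<Longrightarrow> w i \<in> borel_measurable G"
    and vm: "\<And>i. i \<in> I \<Longrightarrow> v i \<in> borel_measurable G"
    and wb: "\<And>i \<omega>. i \<in> I \<Longrightarrow> \<omega> \<in> space M \<Longrightarrow> 0 \<le> w i \<omega> \<and> w i \<omega> \<le> Bw"
    and vb: "\<And>i \<omega>. i \<in> I \<Longrightarrow> \<omega> \<in> space M \<Longrightarrow> 0 \<le> v i \<omega> \<and> v i \<omega> \<le> Bw"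
    and sq: "\<And>\<omega>. \<omega> \<in> space M \<Longrightarrow> (\<Sum>i\<in>I. w i \<omega> * Y i \<omega>)\<^sup>2 \<le> Hr * (\<Sum>i\<in>I. v i \<omega> * Y i \<omega>)"
    and kb: "\<And>\<omega>. \<omega> \<in> space M \<Longrightarrow> (\<Sum>i\<in>I. v i \<omega> * e i \<omega>) \<le> K"
    and lam: "0 \<le> lam" and Hr: "0 \<le> Hr" and K: "0 \<le> K"
  shows "AE \<omega> in M. real_cond_exp M G (\<lambda>\<omega>. exp (lam * (\<Sum>i\<in>I. w i \<omega> * e i \<omega>)
            - lam * (\<Sum>i\<in>I. w i \<omega> * Y i \<omega>) - lam\<^sup>2 * Hr / 2 * K)) \<omega> \<le> 1"
proof -
  define cc where "cc = lam\<^sup>2 * Hr / 2"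
  have cc0: "0 \<le> cc" unfolding cc_def using Hr by simp
  define \<alpha> where "\<alpha> = (\<lambda>\<omega>. lam * (\<Sum>i\<in>I. w i \<omega> * e i \<omega>) - cc * K)"
  define A\<alpha> where "A\<alpha> = lam * (real (card I) * Bw)"
  have Bw0: "I \<noteq> {} \<Longrightarrow> 0 \<le> Bw" using wb
    by (metis P all_not_in_conv order_trans prob_space.not_empty subset_empty subsetI)
  have \<alpha>le: "\<alpha> \<omega> \<le> A\<alpha>" if w: "\<omega> \<in> space M" for \<omega>
  proof -
    have "(\<Sum>i\<in>I. w i \<omega> * e i \<omega>) \<le> (\<Sum>i\<in>I. Bw)"
    proof (intro sum_mono)
      fix i assume i: "i \<in> I"
      have "w i \<omega> * e i \<omega> \<le> Bw * 1" using wb[OF i w] e01[OF i w] by (intro mult_mono) auto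
      then show "w i \<omega> * e i \<omega> \<le> Bw" by simp
    qed
    then have "lam * (\<Sum>i\<in>I. w i \<omega> * e i \<omega>) \<le> lam * (\<Sum>i\<in>I. Bw)" using lam by (intro mult_left_mono)
    moreover have "0 \<le> cc * K" using cc0 K by simp
    ultimately show ?thesis unfolding \<alpha>_def A\<alpha>_def by simp
  qed
  have wM: "\<And>i. i \<in> I \<Longrightarrow> w i \<in> borel_measurable M" using wm measurable_from_subalg[OF sub] by blast
  have vM: "\<And>i. i \<in> I \<Longrightarrow> v i \<in> borel_measurable M" using vm measurable_from_subalg[OF sub] by blast
  have eM: "\<And>i. i \<in> I \<Longrightarrow> e i \<in> borel_measurable M" using em measurable_from_subalg[OF sub] by blast
  have \<alpha>m: "\<alpha> \<in> borel_measurable G" unfolding \<alpha>_def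
    by (intro borel_measurable_diff borel_measurable_times borel_measurable_const borel_measurable_sum)
       (auto intro: wm em)
  have \<alpha>M: "\<alpha> \<in> borel_measurable M" by (rule measurable_from_subalg[OF sub \<alpha>m])
  define c0 where "c0 = (\<lambda>\<omega>. exp (\<alpha> \<omega>))"
  define c where "c = (\<lambda>i \<omega>. exp (\<alpha> \<omega>) * (- lam * w i \<omega> + cc * v i \<omega>))"
  have c0m: "c0 \<in> borel_measurable G" unfolding c0_def using \<alpha>m by measurable
  have cm: "\<And>i. i \<in> I \<Longrightarrow> c i \<in> borel_measurable G" unfolding c_def
  proof -
    fix i assume i: "i \<in> I"
    show "(\<lambda>\<omega>. exp (\<alpha> \<omega>) * (- lam * w i \<omega> + cc * v i \<omega>)) \<in> borel_measurable G"
      using \<alpha>m wm[OF i] vm[OF i] by measurable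
  qed
  have c0b: "\<forall>\<omega>\<in>space M. \<bar>c0 \<omega>\<bar> \<le> exp A\<alpha>" unfolding c0_def using \<alpha>le by auto
  have cb: "\<forall>\<omega>\<in>space M. \<bar>c i \<omega>\<bar> \<le> exp A\<alpha> * (lam * Bw + cc * Bw)" if i: "i \<in> I" for i
  proof
    fix \<omega> assume w: "\<omega> \<in> space M"
    have "\<bar>- lam * w i \<omega> + cc * v i \<omega>\<bar> \<le> lam * w i \<omega> + cc * v i \<omega>"
      using wb[OF i w] vb[OF i w] lam cc0 by (simp add: abs_le_iff mult_nonneg_nonneg)
    also have "\<dots> \<le> lam * Bw + cc * Bw"
      using wb[OF i w] vb[OF i w] lam cc0 by (intro add_mono mult_left_mono) auto
    finally have a: "\<bar>- lam * w i \<omega> + cc * v i \<omega>\<bar> \<le> lam * Bw + cc * Bw" .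
    have b: "exp (\<alpha> \<omega>) \<le> exp A\<alpha>" using \<alpha>le[OF w] by simp
    have "\<bar>c i \<omega>\<bar> = exp (\<alpha> \<omega>) * \<bar>- lam * w i \<omega> + cc * v i \<omega>\<bar>" unfolding c_def by (simp add: abs_mult)
    also have "\<dots> \<le> exp A\<alpha> * (lam * Bw + cc * Bw)" using a b by (intro mult_mono) auto
    finally show "\<bar>c i \<omega>\<bar> \<le> exp A\<alpha> * (lam * Bw + cc * Bw)" .
  qed
  have Yb: "\<forall>\<omega>\<in>space M. \<bar>Y i \<omega>\<bar> \<le> 1" if i: "i \<in> I" for i using Y01[OF i] by auto
  have aff: "AE \<omega> in M. real_cond_exp M G (\<lambda>\<omega>. c0 \<omega> + (\<Sum>i\<in>I. c i \<omega> * Y i \<omega>)) \<omega>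
           = c0 \<omega> + (\<Sum>i\<in>I. c i \<omega> * real_cond_exp M G (Y i) \<omega>)"
    by (rule ce_affine[OF P sub fin c0m _ cm Ym]) (use c0b cb Yb in blast)+
  define f where "f = (\<lambda>\<omega>. exp (lam * (\<Sum>i\<in>I. w i \<omega> * e i \<omega>) - lam * (\<Sum>i\<in>I. w i \<omega> * Y i \<omega>) - lam\<^sup>2 * Hr / 2 * K))"
  have f_eq: "f \<omega> = exp (\<alpha> \<omega>) * exp (- lam * (\<Sum>i\<in>I. w i \<omega> * Y i \<omega>))" for \<omega>
    unfolding f_def \<alpha>_def cc_def by (simp add: exp_add[symmetric] algebra_simps)
  have ptw: "f \<omega> \<le> c0 \<omega> + (\<Sum>i\<in>I. c i \<omega> * Y i \<omega>)" if w: "\<omega> \<in> space M" for \<omega>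
  proof -
    define W where "W = (\<Sum>i\<in>I. w i \<omega> * Y i \<omega>)"
    define V where "V = (\<Sum>i\<in>I. v i \<omega> * Y i \<omega>)"
    have W0: "0 \<le> W" unfolding W_def using wb Y01 w by (intro sum_nonneg) (simp add: mult_nonneg_nonneg)
    have "exp (- (lam * W)) \<le> 1 - lam * W + (lam * W)\<^sup>2 / 2"
      by (rule exp_neg_le_quad) (use lam W0 in simp)
    also have "(lam * W)\<^sup>2 / 2 = lam\<^sup>2 / 2 * W\<^sup>2" by (simp add: power_mult_distrib)
    also have "\<dots> \<le> lam\<^sup>2 / 2 * (Hr * V)" using sq[OF w] unfolding W_def V_def by (intro mult_left_mono) auto
    finally have e1: "exp (- lam * W) \<le> 1 - lam * W + cc * V" unfolding cc_def by (simp add: algebra_simps)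
    have "f \<omega> = exp (\<alpha> \<omega>) * exp (- lam * W)" unfolding W_def by (rule f_eq)
    also have "\<dots> \<le> exp (\<alpha> \<omega>) * (1 - lam * W + cc * V)" using e1 by (intro mult_left_mono) auto
    also have "\<dots> = c0 \<omega> + (\<Sum>i\<in>I. c i \<omega> * Y i \<omega>)"
      unfolding c0_def c_def W_def V_def
      by (simp add: algebra_simps sum_distrib_left sum.distrib sum_subtractf sum_negf)
    finally show ?thesis .
  qed
  have m1: "(\<lambda>\<omega>. \<Sum>i\<in>I. w i \<omega> * e i \<omega>) \<in> borel_measurable M"
    using wM eM by (intro borel_measurable_sum borel_measurable_times) auto
  have m2: "(\<lambda>\<omega>. \<Sum>i\<in>I. w i \<omega> * Y i \<omega>) \<in> borel_measurable M"
    using wM Ym by (intro borel_measurable_sum borel_measurable_times) auto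
  have fM: "f \<in> borel_measurable M" unfolding f_def using m1 m2 by measurable
  have int1: "integrable M f"
  proof (rule integrable_bdd[OF P fM, where B="exp A\<alpha>"])
    fix \<omega> assume w: "\<omega> \<in> space M"
    have W0: "0 \<le> (\<Sum>i\<in>I. w i \<omega> * Y i \<omega>)" using wb Y01 w by (intro sum_nonneg) (simp add: mult_nonneg_nonneg)
    have "exp (- lam * (\<Sum>i\<in>I. w i \<omega> * Y i \<omega>)) \<le> 1" using W0 lam by (simp add: mult_nonneg_nonneg)
    moreover have "exp (\<alpha> \<omega>) \<le> exp A\<alpha>" using \<alpha>le[OF w] by simp
    ultimately have "exp (\<alpha> \<omega>) * exp (- lam * (\<Sum>i\<in>I. w i \<omega> * Y i \<omega>)) \<le> exp A\<alpha> * 1"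
      by (intro mult_mono) auto
    then show "\<bar>f \<omega>\<bar> \<le> exp A\<alpha>" unfolding f_eq by simp
  qed
  have int2: "integrable M (\<lambda>\<omega>. c0 \<omega> + (\<Sum>i\<in>I. c i \<omega> * Y i \<omega>))"
  proof -
    have "integrable M c0" by (rule integrable_bdd'[OF P measurable_from_subalg[OF sub c0m]]) (use c0b in blast)
    moreover have "integrable M (\<lambda>\<omega>. c i \<omega> * Y i \<omega>)" if i: "i \<in> I" for i
      by (rule int_prod_bdd[OF P measurable_from_subalg[OF sub cm[OF i]] Ym[OF i]]) (use cb[OF i] Yb[OF i] in blast)+
    ultimately show ?thesis by auto
  qed
  have mono: "AE \<omega> in M. real_cond_exp M G f \<omega> \<le> real_cond_exp M G (\<lambda>\<omega>. c0 \<omega> + (\<Sum>i\<in>I. c i \<omega> * Y i \<omega>)) \<omega>"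
    by (rule sigma_finite_subalgebra.real_cond_exp_mono[OF sfs_of[OF P sub] _ int1 int2])
      (use ptw in \<open>intro AE_I2; auto\<close>)
  have ceall: "AE \<omega> in M. \<forall>i\<in>I. real_cond_exp M G (Y i) \<omega> = e i \<omega>"
    by (rule AE_finite_allI[OF fin]) (rule ce)
  have "AE \<omega> in M. real_cond_exp M G f \<omega> \<le> 1"
    using mono aff ceall AE_space
  proof eventually_elim
    case (elim \<omega>)
    have "c0 \<omega> + (\<Sum>i\<in>I. c i \<omega> * real_cond_exp M G (Y i) \<omega>) = c0 \<omega> + (\<Sum>i\<in>I. c i \<omega> * e i \<omega>)"
      using elim(3) by simp
    also have "\<dots> = exp (\<alpha> \<omega>) * (1 - lam * (\<Sum>i\<in>I. w i \<omega> * e i \<omega>) + cc * (\<Sum>i\<in>I. v i \<omega> * e i \<omega>))"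
      unfolding c0_def c_def by (simp add: algebra_simps sum_distrib_left sum.distrib sum_subtractf sum_negf)
    also have "\<dots> \<le> exp (\<alpha> \<omega>) * (1 - lam * (\<Sum>i\<in>I. w i \<omega> * e i \<omega>) + cc * K)"
      using kb[OF elim(4)] cc0 by (intro mult_left_mono) (auto intro: mult_left_mono)
    also have "\<dots> \<le> exp (\<alpha> \<omega>) * exp (- lam * (\<Sum>i\<in>I. w i \<omega> * e i \<omega>) + cc * K)"
    proof (intro mult_left_mono)
      show "1 - lam * (\<Sum>i\<in>I. w i \<omega> * e i \<omega>) + cc * K \<le> exp (- lam * (\<Sum>i\<in>I. w i \<omega> * e i \<omega>) + cc * K)"
        using exp_ge_add_one_self[of "- lam * (\<Sum>i\<in>I. w i \<omega> * e i \<omega>) + cc * K"] by (simp add: algebra_simps)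
    qed simp
    also have "\<dots> = 1" unfolding \<alpha>_def by (simp add: exp_add[symmetric])
    finally show ?case using elim(1,2) by simp
  qed
  then show ?thesis unfolding f_def .
qed



lemma ip_S:
  assumes "finite X" "\<And>x. x \<in> X \<Longrightarrow> finite (Act x)"
  shows "ip X Act f g = (\<Sum>p\<in>Sigma X Act. f (fst p) (snd p) * g (fst p) (snd p))"
  unfolding ip_def using assms by (subst sum.Sigma) (auto simp: split_beta)

lemma lin_S:
  assumes "finite X" "\<And>x. x \<in> X \<Longrightarrow> finite (Act x)"
  shows "lin X Act hist c mu = (\<Sum>p\<in>Sigma X Act. c (fst p) (snd p) * real_plan hist mu (fst p) (snd p))"
  unfolding lin_def using assms by (subst sum.Sigma) (auto simp: split_beta)

lemma det_part:
  fixes l h :: "nat \<Rightarrow> 'x \<Rightarrow> 'a \<Rightarrow> real" and mt :: "nat \<Rightarrow> 'x \<Rightarrow> 'a \<Rightarrow> real"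
  assumes game: "game_struct X Act dep H hist" and mus: "positive_policy X Act mus"
    and spos: "0 < s" and s2: "s\<^sup>2 = \<iota> * real H * kap * real T" and iota: "0 < \<iota>" and kap: "0 < kap"
    and l0: "\<And>t x a. t \<in> {1..T} \<Longrightarrow> x \<in> X \<Longrightarrow> a \<in> Act x \<Longrightarrow> 0 \<le> l t x a"
    and h0: "\<And>t x a. t \<in> {1..T} \<Longrightarrow> x \<in> X \<Longrightarrow> a \<in> Act x \<Longrightarrow> 0 \<le> h t x a"
    and hH: "\<And>t. t \<in> {1..T} \<Longrightarrow> (\<Sum>p\<in>Sigma X Act. h t (fst p) (snd p) * real_plan hist mus (fst p) (snd p)) \<le> real H"
    and lH: "\<And>t. t \<in> {1..T} \<Longrightarrow> (\<Sum>p\<in>Sigma X Act. l t (fst p) (snd p) * real_plan hist mus (fst p) (snd p)) \<le> real H"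
    and kapub: "\<And>d. d \<in> policies X Act \<Longrightarrow>
        (\<Sum>p\<in>Sigma X Act. real_plan hist d (fst p) (snd p) / real_plan hist mus (fst p) (snd p)) \<le> kap"
    and mpol: "\<And>t. t \<in> {1..T} \<Longrightarrow> mt t \<in> policies X Act"
    and D1: "(\<Sum>t\<in>{1..T}. \<Sum>p\<in>Sigma X Act. real_plan hist (mt t) (fst p) (snd p) *
               (l t (fst p) (snd p) - h t (fst p) (snd p))) \<le> 3 / 2 * s"
    and coord: "s \<le> real H * real T \<Longrightarrow> \<forall>p\<in>Sigma X Act.
        (\<Sum>t\<in>{1..T}. h t (fst p) (snd p)) - (\<Sum>t\<in>{1..T}. l t (fst p) (snd p))
        \<le> \<iota> / (s / (real H * real T) * real_plan hist mus (fst p) (snd p))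
           + s / (real H * real T) * (\<Sum>t\<in>{1..T}. l t (fst p) (snd p))"
  shows "regret X Act hist T l mt \<le> max (regret X Act hist T h mt) 0 + 4 * s"
proof -
  have finX: "finite X" and actf: "\<And>x. x \<in> X \<Longrightarrow> finite (Act x) \<and> Act x \<noteq> {}"
    using game unfolding game_struct_def by auto
  define S where "S = Sigma X Act"
  have finS: "finite S" unfolding S_def using finX actf by auto
  have musP: "mus \<in> policies X Act" using mus unfolding positive_policy_def by auto
  define Q where "Q = (\<lambda>p. real_plan hist mus (fst p) (snd p))"
  have Qpos: "\<And>p. p \<in> S \<Longrightarrow> 0 < Q p" unfolding Q_def S_def using plan_pos[OF game mus] by auto
  define L where "L = (\<lambda>x a. \<Sum>t\<in>{1..T}. l t x a)"
  define hL where "hL = (\<lambda>x a. \<Sum>t\<in>{1..T}. h t x a)"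
  define K where "K = (\<Sum>t\<in>{1..T}. ip X Act (l t) (\<lambda>x a. real_plan hist (mt t) x a))"
  define Kh where "Kh = (\<Sum>t\<in>{1..T}. ip X Act (h t) (\<lambda>x a. real_plan hist (mt t) x a))"
  have ipS: "\<And>f g. ip X Act f g = (\<Sum>p\<in>S. f (fst p) (snd p) * g (fst p) (snd p))"
    unfolding S_def by (rule ip_S) (use finX actf in auto)
  have linS: "\<And>c d. lin X Act hist c d = (\<Sum>p\<in>S. c (fst p) (snd p) * real_plan hist d (fst p) (snd p))"
    unfolding S_def by (rule lin_S) (use finX actf in auto)
  have KKh: "K - Kh \<le> 3 / 2 * s"
  proof -
    have "K - Kh = (\<Sum>t\<in>{1..T}. \<Sum>p\<in>S. real_plan hist (mt t) (fst p) (snd p) *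
               (l t (fst p) (snd p) - h t (fst p) (snd p)))"
      unfolding K_def Kh_def ipS by (simp add: sum_subtractf[symmetric] algebra_simps)
    then show ?thesis using D1 unfolding S_def by simp
  qed
  have hatle: "Kh - lin X Act hist hL d \<le> regret X Act hist T h mt" if d: "d \<in> policies X Act" for d
  proof -
    have "Kh - lin X Act hist hL d = (\<Sum>t\<in>{1..T}. ip X Act (h t) (\<lambda>x a. real_plan hist (mt t) x a - real_plan hist d x a))"
      unfolding Kh_def hL_def by (rule G_eq[symmetric])
    also have "\<dots> \<le> regret X Act hist T h mt" by (rule regret_eq(2)[OF game d])
    finally show ?thesis .
  qed
  have Lnn: "0 \<le> L x a" if "x \<in> X" "a \<in> Act x" for x a unfolding L_def using l0 that by (intro sum_nonneg) auto
  have linLnn: "0 \<le> lin X Act hist L d" if d: "d \<in> policies X Act" for d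
    unfolding linS S_def using Lnn plan_01(1)[OF game d] by (intro sum_nonneg) (auto intro: mult_nonneg_nonneg)
  have linLmus: "lin X Act hist L mus \<le> real H * real T"
  proof -
    have "lin X Act hist L mus = (\<Sum>t\<in>{1..T}. \<Sum>p\<in>S. l t (fst p) (snd p) * Q p)"
      unfolding linS L_def Q_def sum_distrib_right by (rule sum.swap)
    also have "\<dots> \<le> (\<Sum>t\<in>{1..T}. real H)" using lH unfolding S_def Q_def by (intro sum_mono) auto
    finally show ?thesis by (simp add: mult.commute)
  qed
  have linhLmus: "lin X Act hist hL mus \<le> real H * real T"
  proof -
    have "lin X Act hist hL mus = (\<Sum>t\<in>{1..T}. \<Sum>p\<in>S. h t (fst p) (snd p) * Q p)"
      unfolding linS hL_def Q_def sum_distrib_right by (rule sum.swap)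
    also have "\<dots> \<le> (\<Sum>t\<in>{1..T}. real H)" using hH unfolding S_def Q_def by (intro sum_mono) auto
    finally show ?thesis by (simp add: mult.commute)
  qed
  have main: "(\<Sum>t\<in>{1..T}. ip X Act (l t) (\<lambda>x a. real_plan hist (mt t) x a - real_plan hist d x a))
      \<le> max (regret X Act hist T h mt) 0 + 4 * s" if d: "d \<in> policies X Act" for d
  proof -
    have Geq: "(\<Sum>t\<in>{1..T}. ip X Act (l t) (\<lambda>x a. real_plan hist (mt t) x a - real_plan hist d x a))
        = K - lin X Act hist L d" unfolding K_def L_def by (rule G_eq)
    show ?thesis
    proof (cases "s \<le> real H * real T")
      case True
      define \<gamma> where "\<gamma> = s / (real H * real T)"
      have HT: "0 < real H * real T" using True spos by linarith
      have g0: "0 < \<gamma>" unfolding \<gamma>_def using spos HT by simp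
      define d' where "d' = (if lin X Act hist L d \<le> lin X Act hist L mus then d else mus)"
      have d'P: "d' \<in> policies X Act" unfolding d'_def using d musP by auto
      have d'1: "lin X Act hist L d' \<le> lin X Act hist L d" unfolding d'_def by auto
      have d'2: "lin X Act hist L d' \<le> real H * real T" unfolding d'_def using linLmus by auto
      have co: "\<And>p. p \<in> S \<Longrightarrow> hL (fst p) (snd p) - L (fst p) (snd p) \<le> \<iota> / (\<gamma> * Q p) + \<gamma> * L (fst p) (snd p)"
        using coord[OF True] unfolding S_def hL_def L_def \<gamma>_def Q_def by auto
      have "lin X Act hist hL d' - lin X Act hist L d'
          = (\<Sum>p\<in>S. real_plan hist d' (fst p) (snd p) * (hL (fst p) (snd p) - L (fst p) (snd p)))"
        unfolding linS by (simp add: sum_subtractf[symmetric] algebra_simps)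
      also have "\<dots> \<le> (\<Sum>p\<in>S. real_plan hist d' (fst p) (snd p) * (\<iota> / (\<gamma> * Q p) + \<gamma> * L (fst p) (snd p)))"
        using co plan_01(1)[OF game d'P] unfolding S_def by (intro sum_mono mult_left_mono) auto
      also have "\<dots> = \<iota> / \<gamma> * (\<Sum>p\<in>S. real_plan hist d' (fst p) (snd p) / Q p) + \<gamma> * lin X Act hist L d'"
        unfolding linS by (simp add: algebra_simps sum.distrib sum_distrib_left)
      also have "\<dots> \<le> \<iota> / \<gamma> * kap + \<gamma> * (real H * real T)"
        using kapub[OF d'P] d'2 g0 iota unfolding Q_def S_def
        by (intro add_mono mult_left_mono) auto
      also have "\<iota> / \<gamma> * kap = s"
        unfolding \<gamma>_def using spos HT s2 by (simp add: field_simps power2_eq_square)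
      also have "\<gamma> * (real H * real T) = s" unfolding \<gamma>_def using HT by (metis less_irrefl nonzero_eq_divide_eq)
      finally have c3: "lin X Act hist hL d' - lin X Act hist L d' \<le> s + s" .
      have "K - lin X Act hist L d \<le> K - lin X Act hist L d'" using d'1 by simp
      also have "\<dots> = (K - Kh) + (Kh - lin X Act hist hL d') + (lin X Act hist hL d' - lin X Act hist L d')" by simp
      also have "\<dots> \<le> 3 / 2 * s + regret X Act hist T h mt + (s + s)"
        using KKh hatle[OF d'P] c3 by linarith
      finally show ?thesis unfolding Geq using spos by linarith
    next
      case False
      have "K - lin X Act hist L d \<le> K" using linLnn[OF d] by simp
      also have "\<dots> = (K - Kh) + (Kh - lin X Act hist hL mus) + lin X Act hist hL mus" by simp
      also have "\<dots> \<le> 3 / 2 * s + regret X Act hist T h mt + real H * real T"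
        using KKh hatle[OF musP] linhLmus by linarith
      finally show ?thesis unfolding Geq using False spos by linarith
    qed
  qed
  have finP: "finite (PiE X Act)" using finX actf by (intro finite_PiE) auto
  have neP: "PiE X Act \<noteq> {}" using actf by (simp add: PiE_eq_empty_iff)
  show ?thesis unfolding regret_eq(1)[OF game, of T l mt]
    using finP neP main detp_policy[OF game] by (subst Max_le_iff) auto
qed



theorem theorem2:
  fixes M :: "'w measure" and F :: "nat \<Rightarrow> 'w measure" and T :: nat and \<delta> :: real
    and X :: "'x set" and Act :: "'x \<Rightarrow> 'a set" and dep :: "'x \<Rightarrow> nat" and H :: nat
    and hist :: "'x \<Rightarrow> ('x \<times> 'a) list"
    and mus :: "'x \<Rightarrow> 'a \<Rightarrow> real"
    and mu :: "nat \<Rightarrow> 'w \<Rightarrow> 'x \<Rightarrow> 'a \<Rightarrow> real"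
    and nu :: "nat \<Rightarrow> 'w \<Rightarrow> 'n"
    and pnu :: "'n \<Rightarrow> 'x \<Rightarrow> real" and lnu :: "'n \<Rightarrow> 'x \<Rightarrow> 'a \<Rightarrow> real"
    and xt :: "nat \<Rightarrow> nat \<Rightarrow> 'w \<Rightarrow> 'x" and act :: "nat \<Rightarrow> nat \<Rightarrow> 'w \<Rightarrow> 'a"
    and lt :: "nat \<Rightarrow> nat \<Rightarrow> 'w \<Rightarrow> real"
  assumes game: "game_struct X Act dep H hist"
    and prob: "prob_space M"
    and filt_sub: "\<And>t. t \<le> T \<Longrightarrow> subalgebra M (F t)"
    and filt_mono: "\<And>s t. s \<le> t \<Longrightarrow> t \<le> T \<Longrightarrow> sets (F s) \<subseteq> sets (F t)"
    and mus_pos: "positive_policy X Act mus"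
    and pnu_range: "\<And>v x. x \<in> X \<Longrightarrow> 0 \<le> pnu v x \<and> pnu v x \<le> 1"
    and lnu_range: "\<And>v x a. x \<in> X \<Longrightarrow> a \<in> Act x \<Longrightarrow> 0 \<le> lnu v x a \<and> lnu v x a \<le> 1"
    and mu_policy: "\<And>t \<omega>. t \<in> {1..T} \<Longrightarrow> \<omega> \<in> space M \<Longrightarrow> mu t \<omega> \<in> policies X Act"
    and mu_meas: "\<And>t x a. t \<in> {1..T} \<Longrightarrow> x \<in> X \<Longrightarrow> a \<in> Act x \<Longrightarrow>
                     (\<lambda>\<omega>. mu t \<omega> x a) \<in> borel_measurable (F (t - 1))"
    and nu_meas_p: "\<And>t x. t \<in> {1..T} \<Longrightarrow> x \<in> X \<Longrightarrow>
                     (\<lambda>\<omega>. pnu (nu t \<omega>) x) \<in> borel_measurable (F (t - 1))"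
    and nu_meas_l: "\<And>t x a. t \<in> {1..T} \<Longrightarrow> x \<in> X \<Longrightarrow> a \<in> Act x \<Longrightarrow>
                     (\<lambda>\<omega>. lnu (nu t \<omega>) x a) \<in> borel_measurable (F (t - 1))"
    and traj_meas_x: "\<And>t h. t \<in> {1..T} \<Longrightarrow> h \<in> {1..H} \<Longrightarrow> xt t h \<in> measurable (F t) (count_space UNIV)"
    and traj_meas_a: "\<And>t h. t \<in> {1..T} \<Longrightarrow> h \<in> {1..H} \<Longrightarrow> act t h \<in> measurable (F t) (count_space UNIV)"
    and traj_meas_l: "\<And>t h. t \<in> {1..T} \<Longrightarrow> h \<in> {1..H} \<Longrightarrow> lt t h \<in> borel_measurable (F t)"
    and traj_valid: "\<And>t h \<omega>. t \<in> {1..T} \<Longrightarrow> h \<in> {1..H} \<Longrightarrow> \<omega> \<in> space M \<Longrightarrow>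
                     xt t h \<omega> \<in> X \<and> dep (xt t h \<omega>) = h \<and> act t h \<omega> \<in> Act (xt t h \<omega>)
                     \<and> 0 \<le> lt t h \<omega> \<and> lt t h \<omega> \<le> 1"
    and traj_prob: "\<And>t x a. t \<in> {1..T} \<Longrightarrow> x \<in> X \<Longrightarrow> a \<in> Act x \<Longrightarrow>
                     AE \<omega> in M. real_cond_exp M (F (t - 1))
                        (indicator {\<omega>' \<in> space M. xt t (dep x) \<omega>' = x \<and> act t (dep x) \<omega>' = a}) \<omega>
                      = pnu (nu t \<omega>) x * real_plan hist mus x a"
    and traj_loss: "\<And>t x a. t \<in> {1..T} \<Longrightarrow> x \<in> X \<Longrightarrow> a \<in> Act x \<Longrightarrow>
                     AE \<omega> in M. real_cond_exp M (F (t - 1))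
                        (\<lambda>\<omega>'. lt t (dep x) \<omega>' *
                           indicator {\<omega>'' \<in> space M. xt t (dep x) \<omega>'' = x \<and> act t (dep x) \<omega>'' = a} \<omega>') \<omega>
                      = pnu (nu t \<omega>) x * real_plan hist mus x a * lnu (nu t \<omega>) x a"
    and delta: "0 < \<delta>" "\<delta> < 1"
  shows "measure M {\<omega> \<in> space M.
           regret X Act hist T (\<lambda>t x a. pnu (nu t \<omega>) x * lnu (nu t \<omega>) x a) (\<lambda>t. mu t \<omega>)
           \<le> max (regret X Act hist T
                     (\<lambda>t x a. if xt t (dep x) \<omega> = x \<and> act t (dep x) \<omega> = a
                              then lt t (dep x) \<omega> / real_plan hist mus x a else 0)
                     (\<lambda>t. mu t \<omega>)) 0
             + 4 * sqrt (ln ((real (num_actions X Act) + 1) / \<delta>) * real H * kappa X Act hist mus * real T)}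
         \<ge> 1 - \<delta>"
proof -
  interpret P: prob_space M by (rule prob)
  have finX: "finite X" and H1: "1 \<le> H"
    and actf: "\<And>x. x \<in> X \<Longrightarrow> finite (Act x) \<and> Act x \<noteq> {} \<and> 1 \<le> dep x \<and> dep x \<le> H"
    using game unfolding game_struct_def by auto
  have depH: "\<forall>x\<in>X. dep x \<in> {1..H}" using actf by auto
  define S where "S = Sigma X Act"
  have finS: "finite S" unfolding S_def using finX actf by auto
  have finP: "finite (PiE X Act)" using finX actf by (intro finite_PiE) auto
  have neP: "PiE X Act \<noteq> {}" using actf by (simp add: PiE_eq_empty_iff)
  have musP: "mus \<in> policies X Act" using mus_pos unfolding positive_policy_def by auto
  define lo where "lo = (\<lambda>t x a \<omega>. pnu (nu t \<omega>) x * lnu (nu t \<omega>) x a)"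
  define hl where "hl = (\<lambda>t x a \<omega>. if xt t (dep x) \<omega> = x \<and> act t (dep x) \<omega> = a
                              then lt t (dep x) \<omega> / real_plan hist mus x a else 0)"
  define R where "R = (\<lambda>\<omega>. regret X Act hist T (\<lambda>t x a. lo t x a \<omega>) (\<lambda>t. mu t \<omega>))"
  define hR where "hR = (\<lambda>\<omega>. regret X Act hist T (\<lambda>t x a. hl t x a \<omega>) (\<lambda>t. mu t \<omega>))"
  define \<iota> where "\<iota> = ln ((real (num_actions X Act) + 1) / \<delta>)"
  define kap where "kap = kappa X Act hist mus"
  define s where "s = sqrt (\<iota> * real H * kap * real T)"
  define Sset where "Sset = {\<omega> \<in> space M. R \<omega> \<le> max (hR \<omega>) 0 + 4 * s}"
  have suff: "1 - \<delta> \<le> measure M Sset"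
  proof (cases "T = 0")
    case True
    have R0: "regret X Act hist T l m = 0" for l m
      unfolding regret_eq(1)[OF game] using True neP finP by simp
    have "Sset = space M" unfolding Sset_def R_def hR_def R0 s_def using True by simp
    then show ?thesis using delta by (simp add: P.prob_space)
  next
    case False
    then have T1: "1 \<le> T" by simp
    have spM: "space M \<noteq> {}" by (rule P.not_empty)
    then obtain \<omega>0 where \<omega>0: "\<omega>0 \<in> space M" by auto
    have X_ne: "X \<noteq> {}" using traj_valid[of 1 1 \<omega>0] T1 H1 \<omega>0 by auto
    have numA: "num_actions X Act = card S" unfolding num_actions_def S_def using finX actf by (simp add: card_SigmaI)
    have S_ne: "S \<noteq> {}" using X_ne actf unfolding S_def by auto
    have cardS: "1 \<le> card S" using S_ne finS by (simp add: Suc_le_eq card_gt_0_iff)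
    define Q where "Q = (\<lambda>p. real_plan hist mus (fst p) (snd p))"
    have Qpos: "\<And>p. p \<in> S \<Longrightarrow> 0 < Q p" unfolding Q_def S_def using plan_pos[OF game mus_pos] by auto
    have Qle1: "\<And>p. p \<in> S \<Longrightarrow> Q p \<le> 1" unfolding Q_def S_def using plan_01(2)[OF game musP] by auto
    have Pm01: "\<And>t \<omega> p. t \<in> {1..T} \<Longrightarrow> \<omega> \<in> space M \<Longrightarrow> p \<in> S \<Longrightarrow>
        0 \<le> real_plan hist (mu t \<omega>) (fst p) (snd p) \<and> real_plan hist (mu t \<omega>) (fst p) (snd p) \<le> 1"
      unfolding S_def using plan_01[OF game mu_policy] by auto
    have kap_bdd: "bdd_above ((\<lambda>mu'. \<Sum>x\<in>X. \<Sum>a\<in>Act x. real_plan hist mu' x a / real_plan hist mus x a) ` policies X Act)"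
    proof (rule bdd_aboveI2)
      fix mu' assume mu': "mu' \<in> policies X Act"
      show "(\<Sum>x\<in>X. \<Sum>a\<in>Act x. real_plan hist mu' x a / real_plan hist mus x a)
          \<le> (\<Sum>x\<in>X. \<Sum>a\<in>Act x. 1 / real_plan hist mus x a)"
        using plan_01[OF game mu'] plan_pos[OF game mus_pos] by (intro sum_mono divide_right_mono) (auto simp: less_imp_le)
    qed
    have sumS: "\<And>f. (\<Sum>x\<in>X. \<Sum>a\<in>Act x. f x a) = (\<Sum>p\<in>S. f (fst p) (snd p))"
      unfolding S_def using finX actf by (subst sum.Sigma) (auto simp: split_beta)
    have kapub: "\<And>d. d \<in> policies X Act \<Longrightarrow> (\<Sum>p\<in>S. real_plan hist d (fst p) (snd p) / Q p) \<le> kap"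
    proof -
      fix d assume d: "d \<in> policies X Act"
      have "(\<Sum>x\<in>X. \<Sum>a\<in>Act x. real_plan hist d x a / real_plan hist mus x a) \<le> kap"
        unfolding kap_def kappa_def by (rule cSUP_upper[OF d kap_bdd])
      then show "(\<Sum>p\<in>S. real_plan hist d (fst p) (snd p) / Q p) \<le> kap" unfolding sumS Q_def .
    qed
    have kap1: "real (card S) \<le> kap"
    proof -
      have "(\<Sum>p\<in>S. real_plan hist mus (fst p) (snd p) / Q p) = (\<Sum>p\<in>S. 1)"
      proof (intro sum.cong refl)
        fix p assume "p \<in> S"
        then have "0 < Q p" by (rule Qpos)
        then show "real_plan hist mus (fst p) (snd p) / Q p = 1" unfolding Q_def by simp
      qed
      then show ?thesis using kapub[OF musP] by simp
    qed
    have kpos: "0 < kap" using kap1 cardS by linarith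
    have iota_pos: "0 < \<iota>" unfolding \<iota>_def numA using delta cardS by (simp add: ln_gt_zero_iff field_simps)
    have sq_pos: "0 < \<iota> * real H * kap * real T" using iota_pos H1 kpos T1 by simp
    have spos: "0 < s" unfolding s_def using sq_pos by simp
    have s2: "s\<^sup>2 = \<iota> * real H * kap * real T" unfolding s_def using sq_pos by simp
    define lam where "lam = \<iota> / s"
    define \<gamma> where "\<gamma> = min 1 (s / (real H * real T))"
    have lam0: "0 < lam" unfolding lam_def using iota_pos spos by simp
    have g0: "0 < \<gamma>" unfolding \<gamma>_def using spos H1 T1 by simp
    have g1: "\<gamma> \<le> 1" unfolding \<gamma>_def by simp
    define C where "C = (\<lambda>t p \<omega>. xt t (dep (fst p)) \<omega> = fst p \<and> act t (dep (fst p)) \<omega> = snd p)"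
    define Yv where "Yv = (\<lambda>t p \<omega>'. lt t (dep (fst p)) \<omega>' *
        indicator {\<omega>'' \<in> space M. xt t (dep (fst p)) \<omega>'' = fst p \<and> act t (dep (fst p)) \<omega>'' = snd p} \<omega>')"
    define Ind where "Ind = (\<lambda>t p. indicator {\<omega>'' \<in> space M. xt t (dep (fst p)) \<omega>'' = fst p \<and> act t (dep (fst p)) \<omega>'' = snd p} :: 'w \<Rightarrow> real)"
    define ee where "ee = (\<lambda>t p \<omega>. pnu (nu t \<omega>) (fst p) * real_plan hist mus (fst p) (snd p) * lnu (nu t \<omega>) (fst p) (snd p))"
    define w where "w = (\<lambda>t p \<omega>. real_plan hist (mu t \<omega>) (fst p) (snd p) / real_plan hist mus (fst p) (snd p))"
    define v where "v = (\<lambda>t p \<omega>. real_plan hist (mu t \<omega>) (fst p) (snd p) / (real_plan hist mus (fst p) (snd p))\<^sup>2)"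
    define Z0 where "Z0 = (\<lambda>t \<omega>. lam * (\<Sum>p\<in>S. w t p \<omega> * ee t p \<omega>) - lam * (\<Sum>p\<in>S. w t p \<omega> * Yv t p \<omega>)
        - lam\<^sup>2 * real H / 2 * kap)"
    define Z1 where "Z1 = (\<lambda>p t \<omega>. \<gamma> * Yv t p \<omega> - (\<gamma> + \<gamma>\<^sup>2) * ee t p \<omega>)"
    have pS: "\<And>p. p \<in> S \<Longrightarrow> fst p \<in> X \<and> snd p \<in> Act (fst p)" unfolding S_def by auto
    have dpH: "\<And>p. p \<in> S \<Longrightarrow> dep (fst p) \<in> {1..H}" using pS depH by auto
    have Yv_eq: "\<And>t p \<omega>. \<omega> \<in> space M \<Longrightarrow> Yv t p \<omega> = (if C t p \<omega> then lt t (dep (fst p)) \<omega> else 0)"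
      unfolding Yv_def C_def by auto
    have Ind_eq: "\<And>t p \<omega>. \<omega> \<in> space M \<Longrightarrow> Ind t p \<omega> = (if C t p \<omega> then 1 else 0)"
      unfolding Ind_def C_def by auto
    have lt01: "\<And>t p \<omega>. t \<in> {1..T} \<Longrightarrow> p \<in> S \<Longrightarrow> \<omega> \<in> space M \<Longrightarrow> 0 \<le> lt t (dep (fst p)) \<omega> \<and> lt t (dep (fst p)) \<omega> \<le> 1"
      using traj_valid dpH by blast
    have Yv01: "\<And>t p \<omega>. t \<in> {1..T} \<Longrightarrow> p \<in> S \<Longrightarrow> \<omega> \<in> space M \<Longrightarrow> 0 \<le> Yv t p \<omega> \<and> Yv t p \<omega> \<le> 1"
      using Yv_eq lt01 by auto
    have ee01: "\<And>t p \<omega>. t \<in> {1..T} \<Longrightarrow> p \<in> S \<Longrightarrow> \<omega> \<in> space M \<Longrightarrow> 0 \<le> ee t p \<omega> \<and> ee t p \<omega> \<le> 1"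
    proof -
      fix t p \<omega> assume t: "t \<in> {1..T}" and p: "p \<in> S" and w: "\<omega> \<in> space M"
      have a: "0 \<le> pnu (nu t \<omega>) (fst p)" "pnu (nu t \<omega>) (fst p) \<le> 1" using pnu_range pS[OF p] by auto
      have b: "0 \<le> lnu (nu t \<omega>) (fst p) (snd p)" "lnu (nu t \<omega>) (fst p) (snd p) \<le> 1" using lnu_range pS[OF p] by auto
      have c: "0 \<le> Q p" "Q p \<le> 1" using Qpos[OF p] Qle1[OF p] by auto
      have "pnu (nu t \<omega>) (fst p) * Q p \<le> 1" using a c by (simp add: mult_le_one)
      then have "pnu (nu t \<omega>) (fst p) * Q p * lnu (nu t \<omega>) (fst p) (snd p) \<le> 1" using a b c by (simp add: mult_le_one)
      then show "0 \<le> ee t p \<omega> \<and> ee t p \<omega> \<le> 1" unfolding ee_def using a b c Q_def by simp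
    qed
    have subt: "\<And>t. t \<in> {1..T} \<Longrightarrow> subalgebra M (F t)" using filt_sub by auto
    have subp: "\<And>t. t \<in> {1..T} \<Longrightarrow> subalgebra M (F (t - 1))" using filt_sub by auto
    have subtt: "subalgebra (F t) (F (t - 1))" if t: "t \<in> {1..T}" for t
    proof (rule subalg_mono[OF subp[OF t] subt[OF t]])
      show "sets (F (t - 1)) \<subseteq> sets (F t)" using t by (intro filt_mono) auto
    qed
    have spF: "\<And>t. t \<in> {1..T} \<Longrightarrow> space (F t) = space M" using subt unfolding subalgebra_def by auto
    have Pm_m: "\<And>t p. t \<in> {1..T} \<Longrightarrow> p \<in> S \<Longrightarrow>
        (\<lambda>\<omega>. real_plan hist (mu t \<omega>) (fst p) (snd p)) \<in> borel_measurable (F (t - 1))"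
      using pS by (intro plan_meas[OF game] mu_meas) auto
    have ee_m: "\<And>t p. t \<in> {1..T} \<Longrightarrow> p \<in> S \<Longrightarrow> ee t p \<in> borel_measurable (F (t - 1))"
    proof -
      fix t p assume t: "t \<in> {1..T}" and p: "p \<in> S"
      have a: "(\<lambda>\<omega>. pnu (nu t \<omega>) (fst p)) \<in> borel_measurable (F (t - 1))" using nu_meas_p t pS[OF p] by auto
      have b: "(\<lambda>\<omega>. lnu (nu t \<omega>) (fst p) (snd p)) \<in> borel_measurable (F (t - 1))" using nu_meas_l t pS[OF p] by auto
      show "ee t p \<in> borel_measurable (F (t - 1))" unfolding ee_def using a b by measurable
    qed
    have w_m: "\<And>t p. t \<in> {1..T} \<Longrightarrow> p \<in> S \<Longrightarrow> w t p \<in> borel_measurable (F (t - 1))"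
      unfolding w_def using Pm_m by measurable
    have v_m: "\<And>t p. t \<in> {1..T} \<Longrightarrow> p \<in> S \<Longrightarrow> v t p \<in> borel_measurable (F (t - 1))"
      unfolding v_def using Pm_m by measurable
    have set_m: "\<And>t p. t \<in> {1..T} \<Longrightarrow> p \<in> S \<Longrightarrow>
        {\<omega>'' \<in> space M. xt t (dep (fst p)) \<omega>'' = fst p \<and> act t (dep (fst p)) \<omega>'' = snd p} \<in> sets (F t)"
    proof -
      fix t p assume t: "t \<in> {1..T}" and p: "p \<in> S"
      have mx: "xt t (dep (fst p)) \<in> measurable (F t) (count_space UNIV)" using traj_meas_x t dpH[OF p] by auto
      have ma: "act t (dep (fst p)) \<in> measurable (F t) (count_space UNIV)" using traj_meas_a t dpH[OF p] by auto
      have "{\<omega>'' \<in> space M. xt t (dep (fst p)) \<omega>'' = fst p \<and> act t (dep (fst p)) \<omega>'' = snd p}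
          = (xt t (dep (fst p)) -` {fst p} \<inter> space (F t)) \<inter> (act t (dep (fst p)) -` {snd p} \<inter> space (F t))"
        using spF[OF t] by auto
      also have "\<dots> \<in> sets (F t)" using measurable_sets[OF mx] measurable_sets[OF ma] by auto
      finally show "{\<omega>'' \<in> space M. xt t (dep (fst p)) \<omega>'' = fst p \<and> act t (dep (fst p)) \<omega>'' = snd p} \<in> sets (F t)" .
    qed
    have Ind_m: "\<And>t p. t \<in> {1..T} \<Longrightarrow> p \<in> S \<Longrightarrow> Ind t p \<in> borel_measurable (F t)"
      unfolding Ind_def using set_m by (intro borel_measurable_indicator) auto
    have Yv_m: "\<And>t p. t \<in> {1..T} \<Longrightarrow> p \<in> S \<Longrightarrow> Yv t p \<in> borel_measurable (F t)"
    proof -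
      fix t p assume t: "t \<in> {1..T}" and p: "p \<in> S"
      have a: "lt t (dep (fst p)) \<in> borel_measurable (F t)" using traj_meas_l t dpH[OF p] by auto
      have b: "Ind t p \<in> borel_measurable (F t)" using Ind_m t p by auto
      show "Yv t p \<in> borel_measurable (F t)" using a b unfolding Yv_def Ind_def by measurable
    qed
    have up: "f \<in> borel_measurable (F t)" if "t \<in> {1..T}" "f \<in> borel_measurable (F (t - 1))" for t and f :: "'w \<Rightarrow> real"
      using measurable_from_subalg[OF subtt[OF that(1)] that(2)] .
    have toM: "f \<in> borel_measurable M" if "t \<in> {1..T}" "f \<in> borel_measurable (F t)" for t and f :: "'w \<Rightarrow> real"
      using measurable_from_subalg[OF subt[OF that(1)] that(2)] .
    have Z0_m: "Z0 t \<in> borel_measurable (F t)" if t: "t \<in> {1..T}" for t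
    proof -
      have a: "(\<lambda>\<omega>. \<Sum>p\<in>S. w t p \<omega> * ee t p \<omega>) \<in> borel_measurable (F t)"
      proof (rule borel_measurable_sum)
        fix p assume p: "p \<in> S"
        have a1: "w t p \<in> borel_measurable (F t)" by (rule up[OF t w_m[OF t p]])
        have a2: "ee t p \<in> borel_measurable (F t)" by (rule up[OF t ee_m[OF t p]])
        show "(\<lambda>\<omega>. w t p \<omega> * ee t p \<omega>) \<in> borel_measurable (F t)" by (rule borel_measurable_times[OF a1 a2])
      qed
      have b: "(\<lambda>\<omega>. \<Sum>p\<in>S. w t p \<omega> * Yv t p \<omega>) \<in> borel_measurable (F t)"
      proof (rule borel_measurable_sum)
        fix p assume p: "p \<in> S"
        have a1: "w t p \<in> borel_measurable (F t)" by (rule up[OF t w_m[OF t p]])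
        show "(\<lambda>\<omega>. w t p \<omega> * Yv t p \<omega>) \<in> borel_measurable (F t)" by (rule borel_measurable_times[OF a1 Yv_m[OF t p]])
      qed
      show "Z0 t \<in> borel_measurable (F t)" unfolding Z0_def using a b by measurable
    qed
    have Z1_m: "Z1 p t \<in> borel_measurable (F t)" if t: "t \<in> {1..T}" and p: "p \<in> S" for t p
    proof -
      have a: "ee t p \<in> borel_measurable (F t)" by (rule up[OF t ee_m[OF t p]])
      have b: "Yv t p \<in> borel_measurable (F t)" by (rule Yv_m[OF t p])
      show "Z1 p t \<in> borel_measurable (F t)" unfolding Z1_def using a b by measurable
    qed
    have Pm_t: "\<And>t p \<omega>. t \<in> {1..T} \<Longrightarrow> p \<in> S \<Longrightarrow> \<omega> \<in> space M \<Longrightarrow>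
        0 \<le> real_plan hist (mu t \<omega>) (fst p) (snd p) \<and> real_plan hist (mu t \<omega>) (fst p) (snd p) \<le> 1"
      using Pm01 by blast
    have we: "w t p \<omega> * ee t p \<omega> = real_plan hist (mu t \<omega>) (fst p) (snd p) * lo t (fst p) (snd p) \<omega>"
      if p: "p \<in> S" for t p \<omega>
      using Qpos[OF p] unfolding w_def ee_def lo_def Q_def by (simp add: field_simps)
    have ve: "v t p \<omega> * ee t p \<omega> = real_plan hist (mu t \<omega>) (fst p) (snd p) * lo t (fst p) (snd p) \<omega> / Q p"
      if p: "p \<in> S" for t p \<omega>
      using Qpos[OF p] unfolding v_def ee_def lo_def Q_def by (simp add: field_simps power2_eq_square)
    have lo01: "0 \<le> lo t (fst p) (snd p) \<omega> \<and> lo t (fst p) (snd p) \<omega> \<le> 1" if p: "p \<in> S" for t p \<omega>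
    proof -
      have a: "0 \<le> pnu (nu t \<omega>) (fst p)" "pnu (nu t \<omega>) (fst p) \<le> 1" using pnu_range pS[OF p] by auto
      have b: "0 \<le> lnu (nu t \<omega>) (fst p) (snd p)" "lnu (nu t \<omega>) (fst p) (snd p) \<le> 1" using lnu_range pS[OF p] by auto
      show ?thesis unfolding lo_def using a b by (simp add: mult_le_one)
    qed
    define Bw where "Bw = (\<Sum>p\<in>S. 1 / Q p + 1 / (Q p)\<^sup>2)"
    have Bw1: "1 / Q p \<le> Bw" "1 / (Q p)\<^sup>2 \<le> Bw" if p: "p \<in> S" for p
    proof -
      have nn: "\<forall>p\<in>S. 0 \<le> 1 / Q p + 1 / (Q p)\<^sup>2" using Qpos by (simp add: less_imp_le)
      have "1 / Q p + 1 / (Q p)\<^sup>2 \<le> Bw" unfolding Bw_def by (rule member_le_sum[OF p _ finS]) (use nn in auto)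
      moreover have "0 \<le> 1 / Q p" "0 \<le> 1 / (Q p)\<^sup>2" using Qpos[OF p] by auto
      ultimately show "1 / Q p \<le> Bw" "1 / (Q p)\<^sup>2 \<le> Bw" by linarith+
    qed
    have wb: "0 \<le> w t p \<omega> \<and> w t p \<omega> \<le> Bw" if t: "t \<in> {1..T}" and p: "p \<in> S" and om: "\<omega> \<in> space M" for t p \<omega>
    proof -
      have "0 \<le> real_plan hist (mu t \<omega>) (fst p) (snd p)" "real_plan hist (mu t \<omega>) (fst p) (snd p) \<le> 1"
        using Pm_t[OF t p om] by auto
      then have "0 \<le> w t p \<omega>" "w t p \<omega> \<le> 1 / Q p" using Qpos[OF p] unfolding w_def Q_def
        by (auto intro: divide_right_mono)
      then show ?thesis using Bw1[OF p] by linarith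
    qed
    have vb: "0 \<le> v t p \<omega> \<and> v t p \<omega> \<le> Bw" if t: "t \<in> {1..T}" and p: "p \<in> S" and om: "\<omega> \<in> space M" for t p \<omega>
    proof -
      have "0 \<le> real_plan hist (mu t \<omega>) (fst p) (snd p)" "real_plan hist (mu t \<omega>) (fst p) (snd p) \<le> 1"
        using Pm_t[OF t p om] by auto
      then have "0 \<le> v t p \<omega>" "v t p \<omega> \<le> 1 / (Q p)\<^sup>2" using Qpos[OF p] unfolding v_def Q_def
        by (auto intro: divide_right_mono)
      then show ?thesis using Bw1[OF p] by linarith
    qed
    have cardC: "card {p \<in> S. C t p \<omega>} \<le> H" for t \<omega>
      using card_hits[OF depH, where xs="\<lambda>h. xt t h \<omega>" and as="\<lambda>h. act t h \<omega>" and Act=Act] unfolding S_def C_def by simp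
    have sq: "(\<Sum>p\<in>S. w t p \<omega> * Yv t p \<omega>)\<^sup>2 \<le> real H * (\<Sum>p\<in>S. v t p \<omega> * Yv t p \<omega>)"
      if t: "t \<in> {1..T}" and om: "\<omega> \<in> space M" for t \<omega>
    proof -
      have e1: "(\<Sum>p\<in>S. w t p \<omega> * Yv t p \<omega>) = (\<Sum>p\<in>S. if C t p \<omega> then w t p \<omega> * lt t (dep (fst p)) \<omega> else 0)"
        using Yv_eq[OF om] by (intro sum.cong) auto
      have e2: "(\<Sum>p\<in>S. v t p \<omega> * Yv t p \<omega>) = (\<Sum>p\<in>S. if C t p \<omega> then v t p \<omega> * lt t (dep (fst p)) \<omega> else 0)"
        using Yv_eq[OF om] by (intro sum.cong) auto
      have "(\<Sum>p\<in>S. if C t p \<omega> then w t p \<omega> * lt t (dep (fst p)) \<omega> else 0)\<^sup>2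
          \<le> real H * (\<Sum>p\<in>S. if C t p \<omega> then (w t p \<omega> * lt t (dep (fst p)) \<omega>)\<^sup>2 else 0)"
        by (rule sq_hits[OF finS cardC])
      also have "\<dots> \<le> real H * (\<Sum>p\<in>S. if C t p \<omega> then v t p \<omega> * lt t (dep (fst p)) \<omega> else 0)"
      proof (intro mult_left_mono sum_mono)
        fix p assume p: "p \<in> S"
        define P where "P = real_plan hist (mu t \<omega>) (fst p) (snd p)"
        define l where "l = lt t (dep (fst p)) \<omega>"
        have P01: "0 \<le> P" "P \<le> 1" using Pm_t[OF t p om] unfolding P_def by auto
        have l01: "0 \<le> l" "l \<le> 1" using lt01[OF t p om] unfolding l_def by auto
        have Pl: "0 \<le> P * l" "P * l \<le> 1" using P01 l01 by (auto simp: mult_le_one)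
        have "(P * l)\<^sup>2 \<le> P * l" using Pl by (simp add: power2_eq_square mult_left_le)
        then have "(P * l)\<^sup>2 / (Q p)\<^sup>2 \<le> P * l / (Q p)\<^sup>2" by (rule divide_right_mono) simp
        then have "(w t p \<omega> * l)\<^sup>2 \<le> v t p \<omega> * l"
          unfolding w_def v_def P_def[symmetric] by (simp add: Q_def power_divide power_mult_distrib)
        then show "(if C t p \<omega> then (w t p \<omega> * lt t (dep (fst p)) \<omega>)\<^sup>2 else 0)
            \<le> (if C t p \<omega> then v t p \<omega> * lt t (dep (fst p)) \<omega> else 0)" unfolding l_def by simp
      qed simp
      finally show ?thesis unfolding e1 e2 .
    qed
    have kb: "(\<Sum>p\<in>S. v t p \<omega> * ee t p \<omega>) \<le> kap" if t: "t \<in> {1..T}" and om: "\<omega> \<in> space M" for t \<omega>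
    proof -
      have "(\<Sum>p\<in>S. v t p \<omega> * ee t p \<omega>) \<le> (\<Sum>p\<in>S. real_plan hist (mu t \<omega>) (fst p) (snd p) / Q p)"
      proof (intro sum_mono)
        fix p assume p: "p \<in> S"
        have "real_plan hist (mu t \<omega>) (fst p) (snd p) * lo t (fst p) (snd p) \<omega> \<le> real_plan hist (mu t \<omega>) (fst p) (snd p)"
          using Pm_t[OF t p om] lo01[OF p] by (simp add: mult_left_le)
        then show "v t p \<omega> * ee t p \<omega> \<le> real_plan hist (mu t \<omega>) (fst p) (snd p) / Q p"
          unfolding ve[OF p] using Qpos[OF p] by (simp add: divide_right_mono)
      qed
      also have "\<dots> \<le> kap" by (rule kapub[OF mu_policy[OF t om]])
      finally show ?thesis .
    qed
    have ceY: "AE \<omega> in M. real_cond_exp M (F (t - 1)) (Yv t p) \<omega> = ee t p \<omega>" if t: "t \<in> {1..T}" and p: "p \<in> S" for t p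
      using traj_loss[OF t, of "fst p" "snd p"] pS[OF p] unfolding Yv_def ee_def by simp
    have Z0_ce: "AE \<omega> in M. real_cond_exp M (F (t - 1)) (\<lambda>\<omega>. exp (Z0 t \<omega>)) \<omega> \<le> 1" if t: "t \<in> {1..T}" for t
      unfolding Z0_def
    proof (rule step_Z0[where v="v t" and Bw=Bw and w="w t" and e="ee t" and Y="Yv t" and Hr="real H" and K=kap, OF prob subp[OF t] finS])
      show "\<And>i. i \<in> S \<Longrightarrow> Yv t i \<in> borel_measurable M" using toM[OF t Yv_m[OF t]] by blast
    qed (use Yv01[OF t] ceY[OF t] ee_m[OF t] ee01[OF t] w_m[OF t] v_m[OF t] wb[OF t] vb[OF t] sq[OF t] kb[OF t]
          lam0 kpos in auto)
    have Z0_bnd: "Z0 t \<omega> \<le> lam * real (card S)" if t: "t \<in> {1..T}" and om: "\<omega> \<in> space M" for t \<omega>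
    proof -
      have a: "(\<Sum>p\<in>S. w t p \<omega> * ee t p \<omega>) \<le> (\<Sum>p\<in>S. 1)"
      proof (intro sum_mono)
        fix p assume p: "p \<in> S"
        have "real_plan hist (mu t \<omega>) (fst p) (snd p) * lo t (fst p) (snd p) \<omega> \<le> 1"
          using Pm_t[OF t p om] lo01[OF p] by (simp add: mult_le_one)
        then show "w t p \<omega> * ee t p \<omega> \<le> 1" unfolding we[OF p] .
      qed
      have b: "0 \<le> (\<Sum>p\<in>S. w t p \<omega> * Yv t p \<omega>)"
        using wb[OF t _ om] Yv01[OF t _ om] by (intro sum_nonneg) (simp add: mult_nonneg_nonneg)
      have c: "0 \<le> lam\<^sup>2 * real H / 2 * kap" using kpos by simp
      have "lam * (\<Sum>p\<in>S. w t p \<omega> * ee t p \<omega>) \<le> lam * real (card S)" using a lam0 by (intro mult_left_mono) auto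
      moreover have "0 \<le> lam * (\<Sum>p\<in>S. w t p \<omega> * Yv t p \<omega>)" using b lam0 by simp
      ultimately show ?thesis unfolding Z0_def using c by linarith
    qed
    define B0 where "B0 = {\<omega> \<in> space M. \<iota> \<le> (\<Sum>t\<in>{1..T}. Z0 t \<omega>)}"
    have B0m: "measure M B0 \<le> exp (- \<iota>)" unfolding B0_def
      by (rule exp_supermart[where Z=Z0 and F=F and T=T and M=M and C="lam * real (card S)", OF prob filt_sub filt_mono Z0_m Z0_bnd Z0_ce])
    have Z1_ce: "AE \<omega> in M. real_cond_exp M (F (t - 1)) (\<lambda>\<omega>. exp (Z1 p t \<omega>)) \<omega> \<le> 1"
      if t: "t \<in> {1..T}" and p: "p \<in> S" for t p
      unfolding Z1_def
      by (rule step_Z1[OF prob subp[OF t] toM[OF t Yv_m[OF t p]] _ ceY[OF t p] ee_m[OF t p] _ _ g1])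
         (use Yv01[OF t p] ee01[OF t p] g0 in auto)
    have Z1_bnd: "Z1 p t \<omega> \<le> 1" if t: "t \<in> {1..T}" and p: "p \<in> S" and om: "\<omega> \<in> space M" for t p \<omega>
    proof -
      have "\<gamma> * Yv t p \<omega> \<le> 1" using Yv01[OF t p om] g0 g1 by (simp add: mult_le_one)
      moreover have "0 \<le> (\<gamma> + \<gamma>\<^sup>2) * ee t p \<omega>" using ee01[OF t p om] g0 by simp
      ultimately show ?thesis unfolding Z1_def by linarith
    qed
    define B1 where "B1 = (\<lambda>p. {\<omega> \<in> space M. \<iota> \<le> (\<Sum>t\<in>{1..T}. Z1 p t \<omega>)})"
    have B1m: "measure M (B1 p) \<le> exp (- \<iota>)" if p: "p \<in> S" for p
      unfolding B1_def
      by (rule exp_supermart[where Z="Z1 p" and F=F and T=T and M=M and C=1, OF prob filt_sub filt_mono Z1_m[OF _ p] Z1_bnd[OF _ p] Z1_ce[OF _ p]])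
    have AEH1: "AE \<omega> in M. (\<Sum>p\<in>S. pnu (nu t \<omega>) (fst p) * Q p) \<le> real H" if t: "t \<in> {1..T}" for t
    proof -
      have IndM: "Ind t p \<in> borel_measurable M" if p: "p \<in> S" for p by (rule toM[OF t Ind_m[OF t p]])
      have Ind01: "\<forall>\<omega>\<in>space M. \<bar>Ind t p \<omega>\<bar> \<le> 1" for p unfolding Ind_def by (auto simp: indicator_def)
      have Ind01': "\<exists>B. \<forall>\<omega>\<in>space M. \<bar>Ind t p \<omega>\<bar> \<le> B" for p using Ind01 by blast
      have aff: "AE \<omega> in M. real_cond_exp M (F (t - 1)) (\<lambda>\<omega>. (\<lambda>\<omega>. 0) \<omega> + (\<Sum>p\<in>S. (\<lambda>p \<omega>. 1) p \<omega> * Ind t p \<omega>)) \<omega>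
           = (\<lambda>\<omega>. 0) \<omega> + (\<Sum>p\<in>S. (\<lambda>p \<omega>. 1) p \<omega> * real_cond_exp M (F (t - 1)) (Ind t p) \<omega>)"
        by (rule ce_affine[OF prob subp[OF t] finS]) (use IndM Ind01' in auto)
      have cePr: "AE \<omega> in M. \<forall>p\<in>S. real_cond_exp M (F (t - 1)) (Ind t p) \<omega> = pnu (nu t \<omega>) (fst p) * Q p"
      proof (rule AE_finite_allI[OF finS])
        fix p assume p: "p \<in> S"
        show "AE \<omega> in M. real_cond_exp M (F (t - 1)) (Ind t p) \<omega> = pnu (nu t \<omega>) (fst p) * Q p"
          using traj_prob[OF t, of "fst p" "snd p"] pS[OF p] unfolding Ind_def Q_def by simp
      qed
      have sfs: "sigma_finite_subalgebra M (F (t - 1))" by (rule sfs_of[OF prob subp[OF t]])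
      have intS: "integrable M (\<lambda>\<omega>. 0 + (\<Sum>p\<in>S. 1 * Ind t p \<omega>))"
      proof (rule integrable_bdd[OF prob, where B="real (card S)"])
        show "(\<lambda>\<omega>. 0 + (\<Sum>p\<in>S. 1 * Ind t p \<omega>)) \<in> borel_measurable M"
          using IndM by (simp add: borel_measurable_sum)
        fix \<omega> assume "\<omega> \<in> space M"
        have "(\<Sum>p\<in>S. Ind t p \<omega>) \<le> (\<Sum>p\<in>S. 1)" by (intro sum_mono) (auto simp: Ind_def indicator_def)
        moreover have "0 \<le> (\<Sum>p\<in>S. Ind t p \<omega>)" by (intro sum_nonneg) (auto simp: Ind_def)
        ultimately show "\<bar>0 + (\<Sum>p\<in>S. 1 * Ind t p \<omega>)\<bar> \<le> real (card S)" by simp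
      qed
      have intH: "integrable M (\<lambda>\<omega>. real H)" by simp
      have mono: "AE \<omega> in M. real_cond_exp M (F (t - 1)) (\<lambda>\<omega>. 0 + (\<Sum>p\<in>S. 1 * Ind t p \<omega>)) \<omega>
          \<le> real_cond_exp M (F (t - 1)) (\<lambda>\<omega>. real H) \<omega>"
      proof (rule sigma_finite_subalgebra.real_cond_exp_mono[OF sfs _ intS intH])
        show "AE \<omega> in M. 0 + (\<Sum>p\<in>S. 1 * Ind t p \<omega>) \<le> real H"
        proof (rule AE_I2)
          fix \<omega> assume om: "\<omega> \<in> space M"
          have "(\<Sum>p\<in>S. Ind t p \<omega>) = (\<Sum>p\<in>S. if C t p \<omega> then 1 else 0)"
            using Ind_eq[OF om] by (intro sum.cong) auto
          also have "\<dots> \<le> real H" by (rule sum_hits_le[OF finS cardC]) auto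
          finally show "0 + (\<Sum>p\<in>S. 1 * Ind t p \<omega>) \<le> real H" by simp
        qed
      qed
      have cst: "AE \<omega> in M. real_cond_exp M (F (t - 1)) (\<lambda>\<omega>. real H) \<omega> = real H"
        by (rule sigma_finite_subalgebra.real_cond_exp_F_meas[OF sfs intH]) simp
      show ?thesis using aff cePr mono cst
      proof eventually_elim
        case (elim \<omega>)
        have "(\<Sum>p\<in>S. pnu (nu t \<omega>) (fst p) * Q p) = (\<Sum>p\<in>S. real_cond_exp M (F (t - 1)) (Ind t p) \<omega>)"
          using elim(2) by simp
        also have "\<dots> \<le> real H" using elim(1,3,4) by simp
        finally show ?case .
      qed
    qed
    have AEH: "AE \<omega> in M. \<forall>t\<in>{1..T}. (\<Sum>p\<in>S. pnu (nu t \<omega>) (fst p) * Q p) \<le> real H"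
      by (rule AE_finite_allI) (use AEH1 in auto)
    have sumS': "\<And>f. (\<Sum>x\<in>X. \<Sum>a\<in>Act x. f x a) = (\<Sum>p\<in>S. f (fst p) (snd p))" by (rule sumS)
    have Z0M: "(\<lambda>\<omega>. \<Sum>t\<in>{1..T}. Z0 t \<omega>) \<in> borel_measurable M"
    proof (rule borel_measurable_sum)
      fix t assume t: "t \<in> {1..T}"
      show "Z0 t \<in> borel_measurable M" by (rule toM[OF t Z0_m[OF t]])
    qed
    have B0s: "B0 \<in> sets M" unfolding B0_def using Z0M by measurable
    have B1s: "B1 p \<in> sets M" if p: "p \<in> S" for p
    proof -
      have "(\<lambda>\<omega>. \<Sum>t\<in>{1..T}. Z1 p t \<omega>) \<in> borel_measurable M"
      proof (rule borel_measurable_sum)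
        fix t assume t: "t \<in> {1..T}"
        show "Z1 p t \<in> borel_measurable M" by (rule toM[OF t Z1_m[OF t p]])
      qed
      then show ?thesis unfolding B1_def by measurable
    qed
    define Bad where "Bad = B0 \<union> (\<Union>p\<in>S. B1 p)"
    have B1U: "(\<Union>p\<in>S. B1 p) \<in> sets M" using B1s finS by (intro sets.finite_UN) auto
    have Bads: "Bad \<in> sets M" unfolding Bad_def using B0s B1U by auto
    have eiota: "exp (- \<iota>) = \<delta> / (real (card S) + 1)"
      unfolding \<iota>_def numA using delta by (simp add: exp_minus ln_div exp_diff)
    have "measure M Bad \<le> measure M B0 + measure M (\<Union>p\<in>S. B1 p)"
      unfolding Bad_def by (rule measure_Un_le[OF B0s B1U])
    also have "measure M (\<Union>p\<in>S. B1 p) \<le> (\<Sum>p\<in>S. measure M (B1 p))"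
      by (rule measure_UNION_le[OF finS B1s])
    also have "(\<Sum>p\<in>S. measure M (B1 p)) \<le> (\<Sum>p\<in>S. exp (- \<iota>))" by (intro sum_mono B1m)
    finally have "measure M Bad \<le> exp (- \<iota>) + real (card S) * exp (- \<iota>)" using B0m by simp
    also have "\<dots> = (real (card S) + 1) * (\<delta> / (real (card S) + 1))" unfolding eiota by (simp add: distrib_right add_divide_distrib)
    also have "\<dots> = \<delta>" by (simp add: add_pos_nonneg less_imp_neq[symmetric])
    finally have Badm: "measure M Bad \<le> \<delta>" .
    have lo_M: "(\<lambda>\<omega>. lo t (fst p) (snd p) \<omega>) \<in> borel_measurable M" if t: "t \<in> {1..T}" and p: "p \<in> S" for t p
    proof -
      have a: "(\<lambda>\<omega>. pnu (nu t \<omega>) (fst p)) \<in> borel_measurable (F (t - 1))" using nu_meas_p t pS[OF p] by auto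
      have b: "(\<lambda>\<omega>. lnu (nu t \<omega>) (fst p) (snd p)) \<in> borel_measurable (F (t - 1))" using nu_meas_l t pS[OF p] by auto
      have "(\<lambda>\<omega>. lo t (fst p) (snd p) \<omega>) \<in> borel_measurable (F (t - 1))" unfolding lo_def using a b by measurable
      then show ?thesis by (rule measurable_from_subalg[OF subp[OF t]])
    qed
    have hlY: "hl t (fst p) (snd p) \<omega> = Yv t p \<omega> / Q p" if om: "\<omega> \<in> space M" for t p \<omega>
      unfolding hl_def Yv_eq[OF om] C_def Q_def by simp
    have hl_M: "(\<lambda>\<omega>. hl t (fst p) (snd p) \<omega>) \<in> borel_measurable M" if t: "t \<in> {1..T}" and p: "p \<in> S" for t p
    proof -
      have "(\<lambda>\<omega>. Yv t p \<omega> / Q p) \<in> borel_measurable M" using toM[OF t Yv_m[OF t p]] by measurable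
      then show ?thesis by (subst measurable_cong[where g="\<lambda>\<omega>. Yv t p \<omega> / Q p"]) (auto simp: hlY)
    qed
    have Pm_M: "(\<lambda>\<omega>. real_plan hist (mu t \<omega>) (fst p) (snd p)) \<in> borel_measurable M" if t: "t \<in> {1..T}" and p: "p \<in> S" for t p
      by (rule measurable_from_subalg[OF subp[OF t] Pm_m[OF t p]])
    have regM: "(\<lambda>\<omega>. regret X Act hist T (\<lambda>t x a. f t x a \<omega>) (\<lambda>t. mu t \<omega>)) \<in> borel_measurable M"
      if fM: "\<And>t p. t \<in> {1..T} \<Longrightarrow> p \<in> S \<Longrightarrow> (\<lambda>\<omega>. f t (fst p) (snd p) \<omega>) \<in> borel_measurable M" for f
    proof -
      have eq: "(\<lambda>\<omega>. regret X Act hist T (\<lambda>t x a. f t x a \<omega>) (\<lambda>t. mu t \<omega>)) = (\<lambda>\<omega>. Max ((\<lambda>s'. \<Sum>t\<in>{1..T}. \<Sum>p\<in>S.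
          f t (fst p) (snd p) \<omega> * (real_plan hist (mu t \<omega>) (fst p) (snd p) - real_plan hist (detp s') (fst p) (snd p))) ` PiE X Act))"
        by (rule ext) (simp add: regret_eq(1)[OF game] ip_def sumS')
      show ?thesis unfolding eq
      proof (rule borel_measurable_Max[OF finP])
        fix s' assume "s' \<in> PiE X Act"
        show "(\<lambda>\<omega>. \<Sum>t\<in>{1..T}. \<Sum>p\<in>S. f t (fst p) (snd p) \<omega> * (real_plan hist (mu t \<omega>) (fst p) (snd p)
             - real_plan hist (detp s') (fst p) (snd p))) \<in> borel_measurable M"
        proof (rule borel_measurable_sum)
          fix t assume t: "t \<in> {1..T}"
          show "(\<lambda>\<omega>. \<Sum>p\<in>S. f t (fst p) (snd p) \<omega> * (real_plan hist (mu t \<omega>) (fst p) (snd p)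
             - real_plan hist (detp s') (fst p) (snd p))) \<in> borel_measurable M"
          proof (rule borel_measurable_sum)
            fix p assume p: "p \<in> S"
            have a: "(\<lambda>\<omega>. f t (fst p) (snd p) \<omega>) \<in> borel_measurable M" by (rule fM[OF t p])
            have b: "(\<lambda>\<omega>. real_plan hist (mu t \<omega>) (fst p) (snd p)) \<in> borel_measurable M" by (rule Pm_M[OF t p])
            show "(\<lambda>\<omega>. f t (fst p) (snd p) \<omega> * (real_plan hist (mu t \<omega>) (fst p) (snd p)
             - real_plan hist (detp s') (fst p) (snd p))) \<in> borel_measurable M" using a b by measurable
          qed
        qed
      qed
    qed
    have RM: "R \<in> borel_measurable M" unfolding R_def by (rule regM) (rule lo_M)
    have hRM: "hR \<in> borel_measurable M" unfolding hR_def by (rule regM) (rule hl_M)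
    have Ssets: "Sset \<in> sets M" unfolding Sset_def using RM hRM by measurable
    have wY: "w t p \<omega> * Yv t p \<omega> = real_plan hist (mu t \<omega>) (fst p) (snd p) * hl t (fst p) (snd p) \<omega>"
      if p: "p \<in> S" and om: "\<omega> \<in> space M" for t p \<omega>
      using Qpos[OF p] unfolding hlY[OF om] w_def Q_def by (simp add: field_simps)
    have eQ: "ee t p \<omega> = Q p * lo t (fst p) (snd p) \<omega>" for t p \<omega>
      unfolding ee_def lo_def Q_def by (simp add: algebra_simps)
    have YQ: "Yv t p \<omega> = Q p * hl t (fst p) (snd p) \<omega>" if p: "p \<in> S" and om: "\<omega> \<in> space M" for t p \<omega>
      using Qpos[OF p] unfolding hlY[OF om] by simp
    have good: "R \<omega> \<le> max (hR \<omega>) 0 + 4 * s"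
      if om: "\<omega> \<in> space M" and nB: "\<omega> \<notin> Bad" and AH: "\<forall>t\<in>{1..T}. (\<Sum>p\<in>S. pnu (nu t \<omega>) (fst p) * Q p) \<le> real H"
      for \<omega>
    proof -
      have nB0: "\<not> \<iota> \<le> (\<Sum>t\<in>{1..T}. Z0 t \<omega>)" using nB om unfolding Bad_def B0_def by auto
      have nB1: "\<And>p. p \<in> S \<Longrightarrow> \<not> \<iota> \<le> (\<Sum>t\<in>{1..T}. Z1 p t \<omega>)" using nB om unfolding Bad_def B1_def by auto
      define D where "D = (\<Sum>t\<in>{1..T}. \<Sum>p\<in>S. real_plan hist (mu t \<omega>) (fst p) (snd p) *
               (lo t (fst p) (snd p) \<omega> - hl t (fst p) (snd p) \<omega>))"
      have Zsum: "(\<Sum>t\<in>{1..T}. Z0 t \<omega>) = lam * D - real T * (lam\<^sup>2 * real H / 2 * kap)"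
      proof -
        have "(\<Sum>t\<in>{1..T}. Z0 t \<omega>) = (\<Sum>t\<in>{1..T}. lam * (\<Sum>p\<in>S. real_plan hist (mu t \<omega>) (fst p) (snd p) *
               (lo t (fst p) (snd p) \<omega> - hl t (fst p) (snd p) \<omega>)) - lam\<^sup>2 * real H / 2 * kap)"
        proof (intro sum.cong refl)
          fix t assume t: "t \<in> {1..T}"
          have "(\<Sum>p\<in>S. w t p \<omega> * ee t p \<omega>) - (\<Sum>p\<in>S. w t p \<omega> * Yv t p \<omega>)
              = (\<Sum>p\<in>S. real_plan hist (mu t \<omega>) (fst p) (snd p) * (lo t (fst p) (snd p) \<omega> - hl t (fst p) (snd p) \<omega>))"
            unfolding sum_subtractf[symmetric] by (intro sum.cong refl) (simp add: we wY[OF _ om] right_diff_distrib)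
          then show "Z0 t \<omega> = lam * (\<Sum>p\<in>S. real_plan hist (mu t \<omega>) (fst p) (snd p) *
               (lo t (fst p) (snd p) \<omega> - hl t (fst p) (snd p) \<omega>)) - lam\<^sup>2 * real H / 2 * kap"
            unfolding Z0_def by (simp add: right_diff_distrib[symmetric])
        qed
        also have "\<dots> = lam * D - real T * (lam\<^sup>2 * real H / 2 * kap)"
          unfolding D_def by (simp add: sum_subtractf sum_distrib_left)
        finally show ?thesis .
      qed
      have cT: "real T * (lam\<^sup>2 * real H / 2 * kap) = \<iota> / 2"
      proof -
        have "real T * (lam\<^sup>2 * real H / 2 * kap) = \<iota>\<^sup>2 * (\<iota> * real H * kap * real T) / (2 * s\<^sup>2 * \<iota>)"
          unfolding lam_def using iota_pos spos by (simp add: field_simps power2_eq_square)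
        also have "\<dots> = \<iota> / 2" unfolding s2[symmetric] using iota_pos spos by (simp add: field_simps power2_eq_square)
        finally show ?thesis .
      qed
      have D1: "D \<le> 3 / 2 * s"
      proof -
        have "lam * D < 3 / 2 * \<iota>" using nB0 Zsum cT by linarith
        then have "D < 3 / 2 * \<iota> / lam" using lam0 by (simp add: field_simps)
        also have "3 / 2 * \<iota> / lam = 3 / 2 * s" unfolding lam_def using iota_pos spos by simp
        finally show ?thesis by simp
      qed
      have l0: "0 \<le> lo t x a \<omega>" if "t \<in> {1..T}" "x \<in> X" "a \<in> Act x" for t x a
        using lo01[of "(x, a)" t \<omega>] that unfolding S_def by auto
      have h0: "0 \<le> hl t x a \<omega>" if "t \<in> {1..T}" "x \<in> X" "a \<in> Act x" for t x a
      proof -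
        have "(x, a) \<in> S" using that unfolding S_def by auto
        then show ?thesis using hlY[OF om, of t "(x, a)"] Yv01[OF that(1) _ om, of "(x, a)"] Qpos[of "(x, a)"] by simp
      qed
      have hH: "(\<Sum>p\<in>Sigma X Act. hl t (fst p) (snd p) \<omega> * real_plan hist mus (fst p) (snd p)) \<le> real H"
        if t: "t \<in> {1..T}" for t
      proof -
        have "(\<Sum>p\<in>Sigma X Act. hl t (fst p) (snd p) \<omega> * real_plan hist mus (fst p) (snd p))
            = (\<Sum>p\<in>S. if C t p \<omega> then lt t (dep (fst p)) \<omega> else 0)"
          unfolding S_def[symmetric] using YQ[OF _ om] Yv_eq[OF om] by (intro sum.cong refl) (simp add: Q_def mult.commute)
        also have "\<dots> \<le> real H" by (rule sum_hits_le[OF finS cardC]) (use lt01[OF t _ om] in auto)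
        finally show ?thesis .
      qed
      have lH: "(\<Sum>p\<in>Sigma X Act. lo t (fst p) (snd p) \<omega> * real_plan hist mus (fst p) (snd p)) \<le> real H"
        if t: "t \<in> {1..T}" for t
      proof -
        have "(\<Sum>p\<in>Sigma X Act. lo t (fst p) (snd p) \<omega> * real_plan hist mus (fst p) (snd p))
            \<le> (\<Sum>p\<in>S. pnu (nu t \<omega>) (fst p) * Q p)"
          unfolding S_def[symmetric]
        proof (intro sum_mono)
          fix p assume p: "p \<in> S"
          have a: "0 \<le> pnu (nu t \<omega>) (fst p)" using pnu_range pS[OF p] by auto
          have b: "lnu (nu t \<omega>) (fst p) (snd p) \<le> 1" using lnu_range pS[OF p] by auto
          have "pnu (nu t \<omega>) (fst p) * lnu (nu t \<omega>) (fst p) (snd p) \<le> pnu (nu t \<omega>) (fst p)"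
            using a b by (simp add: mult_left_le)
          then show "lo t (fst p) (snd p) \<omega> * real_plan hist mus (fst p) (snd p) \<le> pnu (nu t \<omega>) (fst p) * Q p"
            unfolding lo_def Q_def using Qpos[OF p] by (simp add: Q_def mult_right_mono)
        qed
        also have "\<dots> \<le> real H" using AH t by auto
        finally show ?thesis .
      qed
      have coord: "\<forall>p\<in>Sigma X Act.
        (\<Sum>t\<in>{1..T}. hl t (fst p) (snd p) \<omega>) - (\<Sum>t\<in>{1..T}. lo t (fst p) (snd p) \<omega>)
        \<le> \<iota> / (s / (real H * real T) * real_plan hist mus (fst p) (snd p))
           + s / (real H * real T) * (\<Sum>t\<in>{1..T}. lo t (fst p) (snd p) \<omega>)"
        if sHT: "s \<le> real H * real T"
      proof
        fix p assume pS': "p \<in> Sigma X Act"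
        then have p: "p \<in> S" unfolding S_def .
        have geq: "\<gamma> = s / (real H * real T)" unfolding \<gamma>_def using sHT spos H1 T1 by (simp add: min_def)
        define hLp where "hLp = (\<Sum>t\<in>{1..T}. hl t (fst p) (snd p) \<omega>)"
        define Lp where "Lp = (\<Sum>t\<in>{1..T}. lo t (fst p) (snd p) \<omega>)"
        have "(\<Sum>t\<in>{1..T}. Z1 p t \<omega>) = \<gamma> * Q p * hLp - (\<gamma> + \<gamma>\<^sup>2) * Q p * Lp"
          unfolding Z1_def hLp_def Lp_def YQ[OF p om] eQ
          by (simp add: sum_subtractf sum_distrib_left algebra_simps)
        then have "\<gamma> * Q p * (hLp - Lp) < \<iota> + \<gamma> * Q p * (\<gamma> * Lp)" using nB1[OF p]
          by (simp add: algebra_simps power2_eq_square)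
        then have "hLp - Lp < (\<iota> + \<gamma> * Q p * (\<gamma> * Lp)) / (\<gamma> * Q p)"
          using g0 Qpos[OF p] by (simp add: field_simps)
        also have "\<dots> = \<iota> / (\<gamma> * Q p) + \<gamma> * Lp" using g0 Qpos[OF p] by (simp add: field_simps)
        finally show "hLp - Lp \<le> \<iota> / (s / (real H * real T) * real_plan hist mus (fst p) (snd p))
           + s / (real H * real T) * Lp" unfolding geq Q_def by simp
      qed
      have kapub': "\<And>d. d \<in> policies X Act \<Longrightarrow>
        (\<Sum>p\<in>Sigma X Act. real_plan hist d (fst p) (snd p) / real_plan hist mus (fst p) (snd p)) \<le> kap"
        using kapub unfolding S_def Q_def by simp
      have D1': "(\<Sum>t\<in>{1..T}. \<Sum>p\<in>Sigma X Act. real_plan hist (mu t \<omega>) (fst p) (snd p) *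
               (lo t (fst p) (snd p) \<omega> - hl t (fst p) (snd p) \<omega>)) \<le> 3 / 2 * s"
        using D1 unfolding D_def S_def .
      show ?thesis unfolding R_def hR_def
        by (rule det_part[OF game mus_pos spos s2 iota_pos kpos, where l="\<lambda>t x a. lo t x a \<omega>"
            and h="\<lambda>t x a. hl t x a \<omega>" and mt="\<lambda>t. mu t \<omega>"])
           (use l0 h0 hH lH kapub' mu_policy[OF _ om] D1' coord in auto)
    qed
    have AEgood: "AE \<omega> in M. \<omega> \<in> space M - Bad \<longrightarrow> \<omega> \<in> Sset"
      using AEH
    proof eventually_elim
      case (elim \<omega>)
      show ?case using good elim unfolding Sset_def by auto
    qed
    have "1 - \<delta> \<le> 1 - measure M Bad" using Badm by simp
    also have "1 - measure M Bad = measure M (space M - Bad)" using P.prob_compl[OF Bads] by simp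
    also have "\<dots> \<le> measure M Sset" by (rule P.finite_measure_mono_AE[OF AEgood Ssets])
    finally show ?thesis .
  qed
  then show ?thesis unfolding Sset_def R_def hR_def s_def \<iota>_def kap_def lo_def hl_def by simp
qed

end
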